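(* Let $d\ge 1$ be an integer, $\Omega\subset\mathbb{R}^d$ a measurable set, $0<\beta<1$, $\mathrm{Re}>0$, $\mathrm{Wi}>0$, $\theta=(1-\beta)/(\mathrm{Re}\,\mathrm{Wi})$, and let $\mathbf{s}:D(\mathbf{s})\to\mathbb{S}^d$ be a stress model with domain $D(\mathbf{s})\subset\mathbb{S}^d_+$. Let $c_0\ge 0$ be a constant and $h(\mathbf{C}):=-\mathrm{Wi}\cdot\operatorname{Tr}[\mathbf{s}(\mathbf{C})]+c_0$ for $\mathbf{C}\in D(\mathbf{s})$. Suppose there are measurable functions $\{f_i\}_{i=0}^\infty$ on $\sigma(D(\mathbf{s}))=\bigcup_{\mathbf{C}\in D(\mathbf{s})}\sigma(\mathbf{C})$ and nonnegative constants $\{c_{i,p}\}_{i,p=0}^\infty$ such that $$h(\mathbf{C})=\sum_{i=0}^\infty\sum_{p=0}^\infty c_{i,p}\big[\operatorname{Tr}\big(f_i(\mathbf{C})^2\big)\big]^p\quad\text{for every }\mathbf{C}\in D(\mathbf{s}).$$ Then the series $$\tilde k(\mathbf{C}_1,\mathbf{C}_2):=\sum_{i=0}^\infty\sum_{p=0}^\infty c_{i,p}\big[\operatorname{Tr}\big(f_i(\mathbf{C}_1)f_i(\mathbf{C}_2)\big)\big]^p$$ converges absolutely for every $\mathbf{C}_1,\mathbf{C}_2\in D(\mathbf{s})$, and the function $k:\mathcal{F}\times\mathcal{F}\to\mathbb{R}$ defined by $$k(\mathbf{q}_1,\mathbf{q}_2):=\frac12\int_\Omega\Big[\mathbf{u}_1(\mathbf{x})\cdot\mathbf{u}_2(\mathbf{x})+\theta\,\tilde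 k\big(\mathbf{c}_1(\mathbf{x}),\mathbf{c}_2(\mathbf{x})\big)\Big]\,d\mathbf{x}$$ (for $\mathbf{q}_j=(\mathbf{u}_j,\mathbf{c}_j)\in\mathcal{F}$) is a positive-definite kernel satisfying $\mathcal{E}(\mathbf{q})=k(\mathbf{q},\mathbf{q})$ for all $\mathbf{q}\in\mathcal{F}$. Moreover, if there is a coefficient $c_{i,p}>0$ with $p\ge1$ such that $f_i$ is injective on $\sigma(D(\mathbf{s}))$ and either $p$ is odd or $f_i$ is nonnegative, then the feature map of the reproducing kernel Hilbert space associated with $k$ is injective on $\mathcal{F}$.
   Context: $\mathbb{S}^d$ denotes the real symmetric $d\times d$ matrices and $\mathbb{S}^d_+$ the positive semidefinite ones. For $\mathbf{C}\in\mathbb{S}^d$ with spectrum $\sigma(\mathbf{C})$ and orthogonal eigenprojections $\mathbf{P}_{\mathbf{C}}(\lambda)$, and a function $f:\sigma(\mathbf{C})\to\mathbb{R}$, one defines $f(\mathbf{C}):=\sum_{\lambda\in\sigma(\mathbf{C})}f(\lambda)\mathbf{P}_{\mathbf{C}}(\lambda)$. The convention $[\,\cdot\,]^0=1$ is used. A state is a pair $\mathbf{q}=(\mathbf{u},\mathbf{c})$ of measurable fields $\mathbf{u}:\Omega\to\mathbb{R}^d$, $\mathbf{c}:\Omega\to D(\mathbf{s})$; its total mechanical energy is $\mathcal{E}(\mathbf{q})=\frac12\int_\Omega\big[|\mathbf{u}(\mathbf{x})|^2+\theta\,h(\mathbf{c}(\mathbf{x}))\big]d\mathbf{x}$ (equivalently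 $\frac12\int_\Omega[|\mathbf{u}|^2+\frac{1}{\mathrm{Re}}\operatorname{Tr}\boldsymbol{\tau}+\theta c_0]\,d\mathbf{x}$ with $\boldsymbol{\tau}=-(1-\beta)\mathbf{s}(\mathbf{c})$). $\mathcal{F}$ is the set of states with $\mathcal{E}(\mathbf{q})<\infty$, two states being identified when they agree almost everywhere on $\Omega$. A function $k:X\times X\to\mathbb{R}$ on a set $X$ is a positive-definite kernel if $\sum_{i,j=1}^m a_ia_jk(x_i,x_j)\ge0$ for all finite families $x_1,\dots,x_m\in X$, $a_1,\dots,a_m\in\mathbb{R}$; it then has a unique reproducing kernel Hilbert space $\mathcal{H}$ of functions on $X$, with feature map $\Phi(x)=k(\cdot,x)$ satisfying $\langle\Phi(x),\Phi(y)\rangle_{\mathcal{H}}=k(x,y)$. Injectivity of $\Phi$ means $k(x,x)-2k(x,y)+k(y,y)>0$ whenever $x\neq y$. *)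

theory Defs
  imports "HOL-Analysis.Analysis"
begin

definition sym_mat :: "real^'n^'n \<Rightarrow> bool" where
  "sym_mat C \<longleftrightarrow> transpose C = C"

definition psd_mat :: "real^'n^'n \<Rightarrow> bool" where
  "psd_mat C \<longleftrightarrow> sym_mat C \<and> (\<forall>v. 0 \<le> v \<bullet> (C *v v))"

definition mat_spectrum :: "real^'n^'n \<Rightarrow> real set" where
  "mat_spectrum C = {l. \<exists>v. v \<noteq> 0 \<and> C *v v = l *\<^sub>R v}"

definition eigenproj :: "real^'n^'n \<Rightarrow> real \<Rightarrow> real^'n^'n" where
  "eigenproj C l = (THE P. transpose P = P \<and> P ** P = P \<and>
       range (\<lambda>v. P *v v) = {v. C *v v = l *\<^sub>R v})"

definition matfun :: "(real \<Rightarrow> real) \<Rightarrow> real^'n^'n \<Rightarrow> real^'n^'n" where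
  "matfun f C = (\<Sum>l\<in>mat_spectrum C. f l *\<^sub>R eigenproj C l)"

definition spec_set :: "(real^'n^'n) set \<Rightarrow> real set" where
  "spec_set D = (\<Union>C\<in>D. mat_spectrum C)"

(* The term c_{i,p} [Tr(f_i(C1) f_i(C2))]^p of the series (convention [.]^0 = 1). *)
definition kterm :: "(nat \<Rightarrow> nat \<Rightarrow> real) \<Rightarrow> (nat \<Rightarrow> real \<Rightarrow> real)
     \<Rightarrow> real^'n^'n \<Rightarrow> real^'n^'n \<Rightarrow> nat \<Rightarrow> nat \<Rightarrow> real" where
  "kterm c f C1 C2 i p = c i p * (trace (matfun (f i) C1 ** matfun (f i) C2)) ^ p"

definition ktilde :: "(nat \<Rightarrow> nat \<Rightarrow> real) \<Rightarrow> (nat \<Rightarrow> real \<Rightarrow> real)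
     \<Rightarrow> real^'n^'n \<Rightarrow> real^'n^'n \<Rightarrow> real" where
  "ktilde c f C1 C2 = (\<Sum>i. \<Sum>p. kterm c f C1 C2 i p)"

definition hfun :: "real \<Rightarrow> real \<Rightarrow> (real^'n^'n \<Rightarrow> real^'n^'n) \<Rightarrow> real^'n^'n \<Rightarrow> real" where
  "hfun Wi c0 s C = - Wi * trace (s C) + c0"

type_synonym 'n state = "(real^'n \<Rightarrow> real^'n) \<times> (real^'n \<Rightarrow> real^'n^'n)"

definition energy :: "(real^'n) set \<Rightarrow> real \<Rightarrow> (real^'n^'n \<Rightarrow> real) \<Rightarrow> 'n state \<Rightarrow> real" where
  "energy \<Omega> \<theta> h q =
     1/2 * (LINT x|lebesgue_on \<Omega>. (norm (fst q x))\<^sup>2 + \<theta> * h (snd q x))"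

(* The set F of states (measurable u, measurable c with values in D(s))
   of finite energy; as the integrand is nonnegative, E(q) < infinity
   is expressed by integrability of the integrand. *)
definition finite_states :: "(real^'n) set \<Rightarrow> (real^'n^'n) set \<Rightarrow> real
     \<Rightarrow> (real^'n^'n \<Rightarrow> real) \<Rightarrow> 'n state set" where
  "finite_states \<Omega> D \<theta> h = {q.
      fst q \<in> borel_measurable (lebesgue_on \<Omega>) \<and>
      snd q \<in> borel_measurable (lebesgue_on \<Omega>) \<and>
      (\<forall>x\<in>\<Omega>. snd q x \<in> D) \<and>
      integrable (lebesgue_on \<Omega>) (\<lambda>x. (norm (fst q x))\<^sup>2 + \<theta> * h (snd q x))}"

definition state_ae_eq :: "(real^'n) set \<Rightarrow> 'n state \<Rightarrow> 'n state \<Rightarrow> bool" where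
  "state_ae_eq \<Omega> q1 q2 \<longleftrightarrow>
     (AE x in lebesgue_on \<Omega>. fst q1 x = fst q2 x \<and> snd q1 x = snd q2 x)"

definition kintegrand :: "real \<Rightarrow> (real^'n^'n \<Rightarrow> real^'n^'n \<Rightarrow> real)
     \<Rightarrow> 'n state \<Rightarrow> 'n state \<Rightarrow> real^'n \<Rightarrow> real" where
  "kintegrand \<theta> kt q1 q2 x = fst q1 x \<bullet> fst q2 x + \<theta> * kt (snd q1 x) (snd q2 x)"

definition kernel :: "(real^'n) set \<Rightarrow> real \<Rightarrow> (real^'n^'n \<Rightarrow> real^'n^'n \<Rightarrow> real)
     \<Rightarrow> 'n state \<Rightarrow> 'n state \<Rightarrow> real" where
  "kernel \<Omega> \<theta> kt q1 q2 = 1/2 * (LINT x|lebesgue_on \<Omega>. kintegrand \<theta> kt q1 q2 x)"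

definition pos_def_kernel :: "'a set \<Rightarrow> ('a \<Rightarrow> 'a \<Rightarrow> real) \<Rightarrow> bool" where
  "pos_def_kernel X k \<longleftrightarrow>
     (\<forall>m (xs :: nat \<Rightarrow> 'a) (a :: nat \<Rightarrow> real). (\<forall>i<m. xs i \<in> X) \<longrightarrow>
        0 \<le> (\<Sum>i<m. \<Sum>j<m. a i * a j * k (xs i) (xs j)))"

end

theory Submission
  imports Defs
begin
lemma sym_mat_iff: "sym_mat (C::real^'n^'n) \<longleftrightarrow> (\<forall>v w. (C *v v) \<bullet> w = v \<bullet> (C *v w))"
proof
  assume "sym_mat C"
  then have "transpose C = C" by (simp add: sym_mat_def)
  then show "\<forall>v w. (C *v v) \<bullet> w = v \<bullet> (C *v w)"
    by (metis dot_lmul_matrix vector_transpose_matrix)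
next
  assume H: "\<forall>v w. (C *v v) \<bullet> w = v \<bullet> (C *v w)"
  have "transpose C *v v = C *v v" for v
  proof -
    have "(transpose C *v v) \<bullet> w = (C *v v) \<bullet> w" for w
      by (metis H dot_lmul_matrix inner_commute transpose_transpose vector_transpose_matrix)
    then show ?thesis using vector_eq_rdot by blast
  qed
  then show "sym_mat C" unfolding sym_mat_def using matrix_eq by blast
qed

lemma sym_dot: "sym_mat (C::real^'n^'n) \<Longrightarrow> (C *v v) \<bullet> w = v \<bullet> (C *v w)"
  using sym_mat_iff by blast

definition eigsp :: "real^'n^'n \<Rightarrow> real \<Rightarrow> (real^'n) set" where
  "eigsp C l = {v. C *v v = l *\<^sub>R v}"

lemma subspace_eigsp: "subspace (eigsp C l)"
  unfolding subspace_def eigsp_def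
  by (simp add: matrix_vector_right_distrib matrix_vector_mult_scaleR scaleR_add_right)

lemma eig_orth:
  assumes "sym_mat C" "C *v v = l *\<^sub>R v" "C *v w = m *\<^sub>R w" "l \<noteq> m"
  shows "v \<bullet> w = 0"
proof -
  have "l * (v \<bullet> w) = m * (v \<bullet> w)"
    using sym_dot[OF assms(1), of v w] assms(2,3) by simp
  then show ?thesis using assms(4) by simp
qed

lemma finite_spectrum:
  assumes "sym_mat (C::real^'n^'n)"
  shows "finite (mat_spectrum C)"
proof -
  have "\<forall>l\<in>mat_spectrum C. \<exists>v. v \<noteq> 0 \<and> C *v v = l *\<^sub>R v"
    by (simp add: mat_spectrum_def)
  then obtain V where V: "\<And>l. l \<in> mat_spectrum C \<Longrightarrow> V l \<noteq> 0 \<and> C *v V l = l *\<^sub>R V l"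
    by metis
  have inj: "inj_on V (mat_spectrum C)"
  proof (rule inj_onI)
    fix l m assume lm: "l \<in> mat_spectrum C" "m \<in> mat_spectrum C" "V l = V m"
    show "l = m"
    proof (rule ccontr)
      assume "l \<noteq> m"
      then have "V l \<bullet> V m = 0" using eig_orth[OF assms] V lm by blast
      then show False using lm V by simp
    qed
  qed
  have po: "pairwise orthogonal (V ` mat_spectrum C)"
    unfolding pairwise_def orthogonal_def
    using eig_orth[OF assms] V by (metis imageE)
  have "0 \<notin> V ` mat_spectrum C" using V by auto
  then have "independent (V ` mat_spectrum C)"
    using po pairwise_orthogonal_independent by blast
  then have "finite (V ` mat_spectrum C)" using finiteI_independent by blast
  then show ?thesis using inj finite_imageD by blast
qed

lemma proj_exists:
  fixes E :: "(real^'n) set"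
  assumes "subspace E"
  shows "\<exists>P::real^'n^'n. transpose P = P \<and> P ** P = P \<and> range (\<lambda>v. P *v v) = E"
proof -
  obtain B where B: "B \<subseteq> E" "pairwise orthogonal B" "\<And>x. x \<in> B \<Longrightarrow> norm x = 1"
    "independent B" "span B = E"
    using orthonormal_basis_subspace[OF assms] by metis
  have fB: "finite B" using B(4) finiteI_independent by blast
  define g where "g = (\<lambda>x::real^'n. \<Sum>b\<in>B. (x \<bullet> b) *\<^sub>R b)"
  have lin: "linear g" unfolding g_def
    by (intro linear_compose_sum) (auto intro!: bounded_linear.linear bounded_linear_scaleR_left bounded_linear_inner_left bounded_linear_compose[of "\<lambda>r. r *\<^sub>R _"])
  define P where "P = matrix g"
  have Pv: "P *v x = g x" for x unfolding P_def using matrix_vector_mul(2)[OF lin] by metis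
  have gE: "g x \<in> E" for x
  proof -
    have "g x \<in> span B" unfolding g_def by (intro span_sum span_scale span_base) 
    then show ?thesis using B(5) by simp
  qed
  have gid: "x \<in> E \<Longrightarrow> g x = x" for x
    unfolding g_def using orthonormal_basis_expand[OF B(2) B(3) _ fB] B(5) by auto
  have dots: "(P *v x) \<bullet> y = x \<bullet> (P *v y)" for x y
    unfolding Pv g_def by (simp add: inner_sum_left inner_sum_right mult.commute inner_commute)
  have T: "transpose P = P"
  proof -
    have "transpose P *v x = P *v x" for x
    proof -
      have "(transpose P *v x) \<bullet> w = (P *v x) \<bullet> w" for w
        by (metis dot_lmul_matrix dots inner_commute transpose_transpose vector_transpose_matrix)
      then show ?thesis using vector_eq_rdot by blast
    qed
    then show ?thesis using matrix_eq by blast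
  qed
  have I: "P ** P = P"
    unfolding matrix_eq by (simp add: matrix_vector_mul_assoc[symmetric] Pv gE gid)
  have R: "range (\<lambda>v. P *v v) = E"
  proof
    show "range (\<lambda>v. P *v v) \<subseteq> E" using gE Pv by auto
    show "E \<subseteq> range (\<lambda>v. P *v v)"
    proof
      fix x assume "x \<in> E" then have "x = P *v x" using gid Pv by simp
      then show "x \<in> range (\<lambda>v. P *v v)" by blast
    qed
  qed
  show ?thesis using T I R by blast
qed

lemma proj_unique:
  fixes P Q :: "real^'n^'n"
  assumes "transpose P = P" "P ** P = P" "transpose Q = Q" "Q ** Q = Q"
    "range (\<lambda>v. P *v v) = range (\<lambda>v. Q *v v)"
  shows "P = Q"
proof -
  have QP: "Q ** P = P"
  proof -
    have "Q *v (P *v v) = P *v v" for v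
    proof -
      obtain w where "P *v v = Q *v w" using assms(5) by (metis rangeI imageE)
      then show ?thesis using assms(4) by (simp add: matrix_vector_mul_assoc)
    qed
    then show ?thesis unfolding matrix_eq by (simp add: matrix_vector_mul_assoc[symmetric])
  qed
  have PQ: "P ** Q = Q"
  proof -
    have "P *v (Q *v v) = Q *v v" for v
    proof -
      obtain w where "Q *v v = P *v w" using assms(5) by (metis rangeI imageE)
      then show ?thesis using assms(2) by (simp add: matrix_vector_mul_assoc)
    qed
    then show ?thesis unfolding matrix_eq by (simp add: matrix_vector_mul_assoc[symmetric])
  qed
  have "P = transpose (Q ** P)" using QP assms(1) by simp
  also have "\<dots> = P ** Q" using assms(1,3) by (simp add: matrix_transpose_mul)
  finally show ?thesis using PQ by simp
qed

lemma eigenproj_props: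
  "transpose (eigenproj C l) = eigenproj C l \<and> eigenproj C l ** eigenproj C l = eigenproj C l \<and>
   range (\<lambda>v. eigenproj C l *v v) = eigsp C l"
proof -
  obtain P where P: "transpose P = P \<and> P ** P = P \<and> range (\<lambda>v. P *v v) = eigsp C l"
    using proj_exists[OF subspace_eigsp] by blast
  have "eigenproj C l = P"
    unfolding eigenproj_def eigsp_def[symmetric]
  proof (rule the_equality)
    show "transpose P = P \<and> P ** P = P \<and> range (\<lambda>v. P *v v) = eigsp C l" by (rule P)
    fix Q assume "transpose Q = Q \<and> Q ** Q = Q \<and> range (\<lambda>v. Q *v v) = eigsp C l"
    then show "Q = P" using P proj_unique by metis
  qed
  then show ?thesis using P by simp
qed

lemma ep_T: "transpose (eigenproj C l) = eigenproj C l" using eigenproj_props by blast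
lemma ep_idem: "eigenproj C l ** eigenproj C l = eigenproj C l" using eigenproj_props by blast
lemma ep_range: "range (\<lambda>v. eigenproj C l *v v) = eigsp C l" using eigenproj_props by blast

lemma ep_in: "C *v (eigenproj C l *v v) = l *\<^sub>R (eigenproj C l *v v)"
  using ep_range[of C l] unfolding eigsp_def by blast

lemma ep_fix: "C *v v = l *\<^sub>R v \<Longrightarrow> eigenproj C l *v v = v"
proof -
  assume "C *v v = l *\<^sub>R v"
  then have "v \<in> range (\<lambda>v. eigenproj C l *v v)" using ep_range[of C l] unfolding eigsp_def by blast
  then obtain w where "v = eigenproj C l *v w" by blast
  then show ?thesis using ep_idem[of C l] by (simp add: matrix_vector_mul_assoc)
qed

lemma ep_dot: "(eigenproj C l *v x) \<bullet> y = x \<bullet> (eigenproj C l *v y)"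
  by (metis dot_lmul_matrix ep_T vector_transpose_matrix)

lemma ep_kill:
  assumes "sym_mat C" "C *v w = m *\<^sub>R w" "l \<noteq> m"
  shows "eigenproj C l *v w = 0"
proof -
  let ?P = "eigenproj C l"
  have "(?P *v w) \<bullet> (?P *v w) = w \<bullet> (?P *v (?P *v w))" by (rule ep_dot)
  also have "\<dots> = w \<bullet> (?P *v w)" by (simp add: matrix_vector_mul_assoc ep_idem)
  also have "\<dots> = 0" using eig_orth[OF assms(1) assms(2) ep_in[of C l w]] assms(3) by simp
  finally show ?thesis by simp
qed

lemma ep_orth:
  assumes "sym_mat C" "l \<noteq> m"
  shows "eigenproj C l ** eigenproj C m = 0"
  unfolding matrix_eq
  using ep_kill[OF assms(1) ep_in assms(2)] by (simp add: matrix_vector_mul_assoc[symmetric])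

lemma ep_C: "C ** eigenproj C l = l *\<^sub>R eigenproj C l"
  unfolding matrix_eq by (simp add: matrix_vector_mul_assoc[symmetric] ep_in scaleR_matrix_vector_assoc)

lemma quad_zero:
  fixes a b :: real
  assumes "\<forall>t. 0 \<le> 2 * t * a + t\<^sup>2 * b"
  shows "a = 0"
proof (rule ccontr)
  assume "a \<noteq> 0"
  define s where "s = 1 / (1 + \<bar>b\<bar>)"
  have s0: "s > 0" unfolding s_def by simp
  have "s * b \<le> s * \<bar>b\<bar>" using s0 by (intro mult_left_mono) auto
  also have "s * \<bar>b\<bar> < 1" unfolding s_def by simp
  finally have sb: "s * b - 2 < 0" by simp
  have "0 \<le> 2 * (- a * s) * a + (- a * s)\<^sup>2 * b" using assms by blast
  also have "\<dots> = a\<^sup>2 * s * (s * b - 2)" by (simp add: power2_eq_square algebra_simps)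
  also have "\<dots> < 0" using \<open>a \<noteq> 0\<close> s0 sb by (intro mult_pos_neg) auto
  finally show False by simp
qed

lemma orth_eigs_zero:
  assumes sym: "sym_mat (C::real^'n^'n)"
    and x: "\<forall>l v. C *v v = l *\<^sub>R v \<longrightarrow> x \<bullet> v = 0"
  shows "x = 0"
proof (rule ccontr)
  assume "x \<noteq> 0"
  define W where "W = {y::real^'n. \<forall>l v. C *v v = l *\<^sub>R v \<longrightarrow> y \<bullet> v = 0}"
  define K where "K = W \<inter> sphere 0 1"
  have Wsub: "subspace W" unfolding W_def subspace_def by (auto simp: inner_add_left) (metis add_0)
  have clW: "closed W" unfolding W_def
  proof -
    have "{y::real^'n. \<forall>l v. C *v v = l *\<^sub>R v \<longrightarrow> y \<bullet> v = 0} = (\<Inter>v\<in>{v. \<exists>l. C *v v = l *\<^sub>R v}. {y. y \<bullet> v = 0})"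
      by auto
    moreover have "closed (\<Inter>v\<in>{v. \<exists>l. C *v v = l *\<^sub>R v}. {y::real^'n. y \<bullet> v = 0})"
      by (intro closed_INT ballI closed_Collect_eq continuous_intros)
    ultimately show "closed {y::real^'n. \<forall>l v. C *v v = l *\<^sub>R v \<longrightarrow> y \<bullet> v = 0}" by simp
  qed
  have cK: "compact K" unfolding K_def
    by (intro closed_Int_compact clW compact_sphere)
  have xW: "x /\<^sub>R norm x \<in> K" using x \<open>x \<noteq> 0\<close> unfolding K_def W_def by auto
  then have "K \<noteq> {}" by blast
  have cont: "continuous_on K (\<lambda>y. y \<bullet> (C *v y))"
    by (intro continuous_intros matrix_vector_mult_linear_continuous_on)
  obtain v where vK: "v \<in> K" and vmax: "\<forall>y\<in>K. y \<bullet> (C *v y) \<le> v \<bullet> (C *v v)"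
    using continuous_attains_sup[OF cK \<open>K \<noteq> {}\<close> cont] by blast
  define lam where "lam = v \<bullet> (C *v v)"
  define M where "M = (\<lambda>y. lam *\<^sub>R y - C *v y)"
  have vW: "v \<in> W" and nv: "norm v = 1" using vK unfolding K_def by auto
  have Mpsd: "0 \<le> y \<bullet> M y" if "y \<in> W" for y
  proof (cases "y = 0")
    case True then show ?thesis by (simp add: M_def)
  next
    case False
    have "y /\<^sub>R norm y \<in> K" using that False Wsub unfolding K_def by (auto simp: subspace_scale)
    then have "(y /\<^sub>R norm y) \<bullet> (C *v (y /\<^sub>R norm y)) \<le> lam" using vmax lam_def by blast
    then have "(y \<bullet> (C *v y)) / (norm y)\<^sup>2 \<le> lam"
      by (simp add: matrix_vector_mult_scaleR power2_eq_square divide_inverse mult_ac)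
    then have "y \<bullet> (C *v y) \<le> lam * (norm y)\<^sup>2" using False by (simp add: divide_le_eq)
    then show ?thesis by (simp add: M_def inner_diff_right power2_norm_eq_inner)
  qed
  have Msym: "y \<bullet> M z = z \<bullet> M y" for y z
    using sym_dot[OF sym, of z y] by (simp add: M_def inner_diff_right inner_commute)
  have Mv0: "v \<bullet> M v = 0" using nv by (simp add: M_def lam_def inner_diff_right power2_norm_eq_inner[symmetric])
  have MW: "M v \<in> W"
    unfolding W_def M_def mem_Collect_eq
  proof (intro allI impI)
    fix l w assume "C *v w = l *\<^sub>R w"
    moreover have "v \<bullet> w = 0" using vW \<open>C *v w = l *\<^sub>R w\<close> unfolding W_def by blast
    moreover have "(C *v v) \<bullet> w = 0" using sym_dot[OF sym, of v w] calculation by simp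
    ultimately show "(lam *\<^sub>R v - C *v v) \<bullet> w = 0" by (simp add: inner_diff_left)
  qed
  have "w \<bullet> M v = 0" if "w \<in> W" for w
  proof -
    have "\<forall>t. 0 \<le> 2 * t * (w \<bullet> M v) + t\<^sup>2 * (w \<bullet> M w)"
    proof
      fix t
      have "v + t *\<^sub>R w \<in> W" using vW that Wsub by (simp add: subspace_add subspace_scale)
      then have "0 \<le> (v + t *\<^sub>R w) \<bullet> M (v + t *\<^sub>R w)" by (rule Mpsd)
      also have "M (v + t *\<^sub>R w) = M v + t *\<^sub>R M w"
        by (simp add: M_def matrix_vector_right_distrib matrix_vector_mult_scaleR algebra_simps)
      finally show "0 \<le> 2 * t * (w \<bullet> M v) + t\<^sup>2 * (w \<bullet> M w)"
        using Mv0 Msym[of v w] by (simp add: inner_add_left inner_add_right power2_eq_square algebra_simps)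
    qed
    then show ?thesis by (rule quad_zero)
  qed
  then have "M v \<bullet> M v = 0" using MW by blast
  then have "M v = 0" by simp
  then have "C *v v = lam *\<^sub>R v" by (simp add: M_def)
  then have "v \<bullet> v = 0" using vW unfolding W_def by blast
  then show False using nv by simp
qed

lemma mvsum: "(sum A S) *v (x::real^'n) = (\<Sum>a\<in>S. A a *v x)"
  by (induction S rule: infinite_finite_induct) (auto simp: matrix_vector_mult_add_rdistrib)

lemma msum_left: "(B::real^'n^'n) ** sum (A::'b \<Rightarrow> real^'n^'n) S = (\<Sum>a\<in>S. B ** A a)"
  by (induction S rule: infinite_finite_induct) (auto simp: matrix_add_ldistrib)

lemma matrix_add_rdistrib': "((A::real^'n^'n) + B) ** (C::real^'n^'n) = (A ** C) + (B ** C)"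
  by (vector matrix_matrix_mult_def sum.distrib[symmetric] field_simps)

lemma msum_right: "sum (A::'b \<Rightarrow> real^'n^'n) S ** (B::real^'n^'n) = (\<Sum>a\<in>S. A a ** B)"
proof (induction S rule: infinite_finite_induct)
  case (insert x F)
  then show ?case using matrix_add_rdistrib'[of "A x" "sum A F" B] by simp
qed auto

lemma ep_sum_eig:
  assumes sym: "sym_mat C" and e: "C *v e = m *\<^sub>R e"
  shows "(\<Sum>l\<in>mat_spectrum C. eigenproj C l *v e) = e"
proof (cases "e = 0")
  case True then show ?thesis by simp
next
  case False
  then have m: "m \<in> mat_spectrum C" using e unfolding mat_spectrum_def by blast
  have "(\<Sum>l\<in>mat_spectrum C. eigenproj C l *v e) = (\<Sum>l\<in>mat_spectrum C. if l = m then e else 0)"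
    using ep_fix[OF e] ep_kill[OF sym e] by (intro sum.cong) auto
  also have "\<dots> = e" using m finite_spectrum[OF sym] by simp
  finally show ?thesis .
qed

lemma spectral_sum:
  assumes sym: "sym_mat (C::real^'n^'n)"
  shows "(\<Sum>l\<in>mat_spectrum C. eigenproj C l) = mat 1"
  unfolding matrix_eq
proof
  fix x :: "real^'n"
  define y where "y = x - (\<Sum>l\<in>mat_spectrum C. eigenproj C l *v x)"
  have "y = 0"
  proof (rule orth_eigs_zero[OF sym], intro allI impI)
    fix m e assume e: "C *v e = m *\<^sub>R e"
    have "(\<Sum>l\<in>mat_spectrum C. eigenproj C l *v x) \<bullet> e = x \<bullet> (\<Sum>l\<in>mat_spectrum C. eigenproj C l *v e)"
      by (simp add: inner_sum_left inner_sum_right ep_dot)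
    then show "y \<bullet> e = 0" unfolding y_def using ep_sum_eig[OF sym e] by (simp add: inner_diff_left)
  qed
  then show "(\<Sum>l\<in>mat_spectrum C. eigenproj C l) *v x = mat 1 *v x"
    by (simp add: mvsum y_def)
qed

lemma mscale_left: "(a *\<^sub>R (A::real^'n^'n)) ** (B::real^'n^'n) = a *\<^sub>R (A ** B)"
  by (simp add: matrix_matrix_mult_def vec_eq_iff sum_distrib_left mult_ac)

lemma mscale_right: "(A::real^'n^'n) ** (b *\<^sub>R (B::real^'n^'n)) = b *\<^sub>R (A ** B)"
  by (simp add: matrix_matrix_mult_def vec_eq_iff sum_distrib_left mult_ac)

lemma mvscale: "(a *\<^sub>R (A::real^'n^'n)) *v x = a *\<^sub>R (A *v x)"
  by (simp add: matrix_vector_mult_def vec_eq_iff sum_distrib_left mult_ac)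

lemma mf_add: "matfun (\<lambda>t. g t + h t) C = matfun g C + matfun h C"
  unfolding matfun_def by (simp add: scaleR_add_left sum.distrib)

lemma mf_scale: "matfun (\<lambda>t. a * g t) C = a *\<^sub>R matfun g C"
  unfolding matfun_def by (simp add: scaleR_sum_right)

lemma mf_cong: "(\<And>l. l \<in> mat_spectrum C \<Longrightarrow> g l = h l) \<Longrightarrow> matfun g C = matfun h C"
  unfolding matfun_def by (intro sum.cong) auto

lemma mf_const: "sym_mat C \<Longrightarrow> matfun (\<lambda>t. a) C = a *\<^sub>R mat 1"
  unfolding matfun_def by (simp add: scaleR_sum_right[symmetric] spectral_sum)

lemma mf_id: "sym_mat C \<Longrightarrow> matfun (\<lambda>t. t) C = C"
proof -
  assume s: "sym_mat C"
  have "C = C ** (\<Sum>l\<in>mat_spectrum C. eigenproj C l)" using spectral_sum[OF s] by simp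
  also have "\<dots> = matfun (\<lambda>t. t) C" unfolding matfun_def msum_left ep_C ..
  finally show ?thesis by simp
qed

lemma mf_mult:
  assumes s: "sym_mat C"
  shows "matfun (\<lambda>t. g t * h t) C = matfun g C ** matfun h C"
proof -
  let ?S = "mat_spectrum C" and ?P = "eigenproj C"
  have "matfun g C ** matfun h C = (\<Sum>l\<in>?S. \<Sum>m\<in>?S. (g l * h m) *\<^sub>R (?P l ** ?P m))"
  proof -
    have "matfun g C ** matfun h C = (\<Sum>l\<in>?S. (g l *\<^sub>R ?P l) ** matfun h C)"
      unfolding matfun_def[of g] msum_right ..
    also have "\<dots> = (\<Sum>l\<in>?S. \<Sum>m\<in>?S. (g l *\<^sub>R ?P l) ** (h m *\<^sub>R ?P m))"
      unfolding matfun_def[of h] msum_left ..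
    finally show ?thesis by (simp add: mscale_left mscale_right mult.commute)
  qed
  also have "\<dots> = (\<Sum>l\<in>?S. \<Sum>m\<in>?S. if m = l then (g l * h l) *\<^sub>R ?P l else 0)"
    using ep_orth[OF s] ep_idem by (intro sum.cong refl) auto
  also have "\<dots> = matfun (\<lambda>t. g t * h t) C"
    unfolding matfun_def using finite_spectrum[OF s] by simp
  finally show ?thesis by simp
qed

lemma mf_dot: "(matfun g C *v x) \<bullet> y = x \<bullet> (matfun g C *v y)"
  unfolding matfun_def mvsum
  by (simp add: inner_sum_left inner_sum_right mvscale ep_dot)

lemma mf_sym: "sym_mat (matfun g C)"
  using mf_dot sym_mat_iff by blast

lemma mf_T: "transpose (matfun g C) = matfun g C"
  using mf_sym sym_mat_def by blast

lemma mf_vec: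
  assumes s: "sym_mat C" and v: "C *v v = l *\<^sub>R v"
  shows "matfun g C *v v = g l *\<^sub>R v"
proof (cases "v = 0")
  case True then show ?thesis by simp
next
  case False
  then have l: "l \<in> mat_spectrum C" using v unfolding mat_spectrum_def by blast
  have "matfun g C *v v = (\<Sum>m\<in>mat_spectrum C. if m = l then g l *\<^sub>R v else 0)"
    unfolding matfun_def mvsum
    using ep_fix[OF v] ep_kill[OF s v] by (intro sum.cong) (auto simp: mvscale)
  then show ?thesis using l finite_spectrum[OF s] by simp
qed

lemma trace_dotT: "trace ((A::real^'n^'n) ** transpose B) = A \<bullet> B"
  by (simp add: trace_def matrix_matrix_mult_def transpose_def inner_vec_def)

lemma trace_dot: "transpose B = B \<Longrightarrow> trace ((A::real^'n^'n) ** B) = A \<bullet> B"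
  using trace_dotT[of A B] by simp

lemma trace_mf: "trace (matfun g C1 ** matfun h C2) = matfun g C1 \<bullet> matfun h C2"
  by (rule trace_dot[OF mf_T])

lemma trace_proj_nonneg:
  fixes P Q :: "real^'n^'n"
  assumes "transpose P = P" "P ** P = P" "transpose Q = Q" "Q ** Q = Q"
  shows "0 \<le> trace (P ** Q)"
proof -
  have "trace (P ** Q) = trace ((P ** P) ** (Q ** Q))" using assms by simp
  also have "\<dots> = trace (P ** (P ** Q ** Q))" by (simp add: matrix_mul_assoc)
  also have "\<dots> = trace ((P ** Q ** Q) ** P)" by (rule trace_mul_sym)
  also have "\<dots> = trace ((P ** Q) ** transpose (P ** Q))"
    using assms by (simp add: matrix_transpose_mul matrix_mul_assoc)
  also have "\<dots> = (P ** Q) \<bullet> (P ** Q)" by (rule trace_dotT)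
  finally show ?thesis by simp
qed

lemma ep_mf:
  assumes s: "sym_mat C" and m: "m \<in> mat_spectrum C"
  shows "eigenproj C m ** matfun g C = g m *\<^sub>R eigenproj C m"
proof -
  have "eigenproj C m ** matfun g C = (\<Sum>l\<in>mat_spectrum C. g l *\<^sub>R (eigenproj C m ** eigenproj C l))"
    unfolding matfun_def msum_left mscale_right ..
  also have "\<dots> = (\<Sum>l\<in>mat_spectrum C. if l = m then g m *\<^sub>R eigenproj C m else 0)"
    using ep_orth[OF s] ep_idem by (intro sum.cong refl) auto
  finally show ?thesis using m finite_spectrum[OF s] by simp
qed

lemma mv_sum_right: "(A::real^'n^'n) *v sum f S = (\<Sum>a\<in>S. A *v f a)"
  by (induction S rule: infinite_finite_induct) (auto simp: matrix_vector_right_distrib)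

lemma mf_inj:
  assumes s1: "sym_mat C1" and s2: "sym_mat C2"
    and inj: "inj_on g (mat_spectrum C1 \<union> mat_spectrum C2)"
    and eq: "matfun g C1 = matfun g C2"
  shows "C1 = C2"
proof -
  have step1: "C2 *v v = l *\<^sub>R v" if l: "l \<in> mat_spectrum C1" and v: "C1 *v v = l *\<^sub>R v" for l v
  proof -
    have Fv: "matfun g C2 *v v = g l *\<^sub>R v" using mf_vec[OF s1 v, of g] eq by simp
    have each: "m *\<^sub>R (eigenproj C2 m *v v) = l *\<^sub>R (eigenproj C2 m *v v)" if m: "m \<in> mat_spectrum C2" for m
    proof (cases "m = l")
      case False
      have "g m *\<^sub>R (eigenproj C2 m *v v) = eigenproj C2 m *v (matfun g C2 *v v)"
        using ep_mf[OF s2 m, of g] by (simp add: matrix_vector_mul_assoc mvscale)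
      also have "\<dots> = g l *\<^sub>R (eigenproj C2 m *v v)" using Fv by (simp add: matrix_vector_mult_scaleR)
      finally have "(g m - g l) *\<^sub>R (eigenproj C2 m *v v) = 0" by (simp add: scaleR_diff_left)
      moreover have "g m \<noteq> g l" using inj m l False unfolding inj_on_def by blast
      ultimately have "eigenproj C2 m *v v = 0" by simp
      then show ?thesis by simp
    qed simp
    have "C2 *v v = C2 *v ((\<Sum>m\<in>mat_spectrum C2. eigenproj C2 m) *v v)"
      using spectral_sum[OF s2] by simp
    also have "\<dots> = (\<Sum>m\<in>mat_spectrum C2. m *\<^sub>R (eigenproj C2 m *v v))"
      unfolding mvsum mv_sum_right matrix_vector_mul_assoc ep_C mvscale ..
    also have "\<dots> = (\<Sum>m\<in>mat_spectrum C2. l *\<^sub>R (eigenproj C2 m *v v))"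
      using each by (intro sum.cong) auto
    also have "\<dots> = l *\<^sub>R ((\<Sum>m\<in>mat_spectrum C2. eigenproj C2 m) *v v)"
      by (simp add: mvsum scaleR_sum_right)
    also have "\<dots> = l *\<^sub>R v" using spectral_sum[OF s2] by simp
    finally show ?thesis .
  qed
  have "C2 *v x = C1 *v x" for x
  proof -
    have "C2 *v x = C2 *v ((\<Sum>l\<in>mat_spectrum C1. eigenproj C1 l) *v x)"
      using spectral_sum[OF s1] by simp
    also have "\<dots> = (\<Sum>l\<in>mat_spectrum C1. C2 *v (eigenproj C1 l *v x))"
      unfolding mvsum mv_sum_right ..
    also have "\<dots> = (\<Sum>l\<in>mat_spectrum C1. C1 *v (eigenproj C1 l *v x))"
    proof (rule sum.cong[OF refl])
      fix l assume "l \<in> mat_spectrum C1"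
      then show "C2 *v (eigenproj C1 l *v x) = C1 *v (eigenproj C1 l *v x)"
        using step1[OF _ ep_in[of C1 l x]] ep_in[of C1 l x] by simp
    qed
    also have "\<dots> = C1 *v ((\<Sum>l\<in>mat_spectrum C1. eigenproj C1 l) *v x)"
      unfolding mvsum mv_sum_right ..
    also have "\<dots> = C1 *v x" using spectral_sum[OF s1] by simp
    finally show ?thesis .
  qed
  then show ?thesis using matrix_eq by metis
qed

lemma mf_dot_nonneg:
  assumes "\<forall>t\<in>mat_spectrum C1 \<union> mat_spectrum C2. 0 \<le> g t"
  shows "0 \<le> matfun g C1 \<bullet> matfun g C2"
proof -
  have "matfun g C1 \<bullet> matfun g C2 = (\<Sum>l\<in>mat_spectrum C1. \<Sum>m\<in>mat_spectrum C2.
           (g l * g m) * trace (eigenproj C1 l ** eigenproj C2 m))"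
    unfolding matfun_def by (simp add: inner_sum_left inner_sum_right trace_dot[OF ep_T] sum_distrib_left mult_ac sum.swap[of _ "mat_spectrum C2"])
  also have "\<dots> \<ge> 0"
    using assms by (intro sum_nonneg mult_nonneg_nonneg trace_proj_nonneg ep_T ep_idem) auto
  finally show ?thesis .
qed

lemma pd_pow:
  fixes x :: "nat \<Rightarrow> 'a::euclidean_space"
  shows "0 \<le> (\<Sum>i<m. \<Sum>j<m. a i * a j * (x i \<bullet> x j) ^ p)"
proof (induction p arbitrary: a)
  case 0
  have "(\<Sum>i<m. \<Sum>j<m. a i * a j * (x i \<bullet> x j) ^ 0) = (\<Sum>i<m. a i)\<^sup>2"
    by (simp add: power2_eq_square sum_product)
  then show ?case by simp
next
  case (Suc p)
  have "(\<Sum>i<m. \<Sum>j<m. a i * a j * (x i \<bullet> x j) ^ Suc p) =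
        (\<Sum>i<m. \<Sum>j<m. \<Sum>b\<in>Basis. (a i * (x i \<bullet> b)) * (a j * (x j \<bullet> b)) * (x i \<bullet> x j) ^ p)"
  proof (intro sum.cong refl)
    fix i j
    show "a i * a j * (x i \<bullet> x j) ^ Suc p = (\<Sum>b\<in>Basis. (a i * (x i \<bullet> b)) * (a j * (x j \<bullet> b)) * (x i \<bullet> x j) ^ p)"
    proof -
      have e: "x i \<bullet> x j = (\<Sum>b\<in>Basis. (x i \<bullet> b) * (x j \<bullet> b))" by (rule euclidean_inner)
      have "a i * a j * (x i \<bullet> x j) ^ Suc p = (a i * a j * (x i \<bullet> x j) ^ p) * (\<Sum>b\<in>Basis. (x i \<bullet> b) * (x j \<bullet> b))"
        by (simp only: power_Suc2 mult.assoc flip: e)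
      also have "\<dots> = (\<Sum>b\<in>Basis. (a i * (x i \<bullet> b)) * (a j * (x j \<bullet> b)) * (x i \<bullet> x j) ^ p)"
        by (simp add: sum_distrib_left mult_ac)
      finally show ?thesis .
    qed
  qed
  also have "\<dots> = (\<Sum>b\<in>Basis. \<Sum>i<m. \<Sum>j<m. (a i * (x i \<bullet> b)) * (a j * (x j \<bullet> b)) * (x i \<bullet> x j) ^ p)"
    by (simp add: sum.swap[of _ Basis])
  also have "\<dots> \<ge> 0"
  proof (rule sum_nonneg)
    fix b :: 'a
    show "0 \<le> (\<Sum>i<m. \<Sum>j<m. (a i * (x i \<bullet> b)) * (a j * (x j \<bullet> b)) * (x i \<bullet> x j) ^ p)"
      using Suc.IH[of "\<lambda>i. a i * (x i \<bullet> b)"] by simp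
  qed
  finally show ?case .
qed

lemma pow_bound:
  fixes x y :: "'a::real_inner"
  shows "\<bar>x \<bullet> y\<bar> ^ p \<le> (x \<bullet> x) ^ p + (y \<bullet> y) ^ p"
proof -
  have "\<bar>x \<bullet> y\<bar> \<le> norm x * norm y" by (rule Cauchy_Schwarz_ineq2)
  also have "\<dots> \<le> max (x \<bullet> x) (y \<bullet> y)"
  proof (cases "norm x \<le> norm y")
    case True
    then have "norm x * norm y \<le> norm y * norm y" by (simp add: mult_right_mono)
    then show ?thesis by (simp add: power2_norm_eq_inner[symmetric] power2_eq_square)
  next
    case False
    then have "norm x * norm y \<le> norm x * norm x" by (simp add: mult_left_mono)
    then show ?thesis by (simp add: power2_norm_eq_inner[symmetric] power2_eq_square)
  qed
  finally have "\<bar>x \<bullet> y\<bar> ^ p \<le> (max (x \<bullet> x) (y \<bullet> y)) ^ p" by (intro power_mono) auto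
  also have "\<dots> \<le> (x \<bullet> x) ^ p + (y \<bullet> y) ^ p"
    by (cases "x \<bullet> x \<le> y \<bullet> y") (auto simp: max_def)
  finally show ?thesis .
qed

lemma pow_strict:
  fixes x y :: "'a::real_inner"
  assumes "x \<noteq> y" "1 \<le> p" "odd p \<or> 0 \<le> x \<bullet> y"
  shows "0 < (x \<bullet> x) ^ p - 2 * (x \<bullet> y) ^ p + (y \<bullet> y) ^ p"
proof (cases "x \<bullet> y < 0")
  case True
  then have "odd p" using assms(3) by auto
  then have "(x \<bullet> y) ^ p < 0" using True by (simp add: power_less_zero_eq)
  moreover have "0 \<le> (x \<bullet> x) ^ p" "0 \<le> (y \<bullet> y) ^ p" by auto
  ultimately show ?thesis by linarith
next
  case False
  define r where "r = norm x"
  define s where "s = norm y"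
  have r0: "0 \<le> r" and s0: "0 \<le> s" by (auto simp: r_def s_def)
  have a: "x \<bullet> x = r ^ 2" and e: "y \<bullet> y = s ^ 2" by (auto simp: r_def s_def power2_norm_eq_inner)
  have b0: "0 \<le> x \<bullet> y" using False by simp
  have "x \<bullet> y \<le> r * s" unfolding r_def s_def using Cauchy_Schwarz_ineq2[of x y] by simp
  then have bp: "(x \<bullet> y) ^ p \<le> (r * s) ^ p" using b0 by (intro power_mono) auto
  show ?thesis
  proof (cases "r = s")
    case True
    have "0 < (x - y) \<bullet> (x - y)" using assms(1) by simp
    then have "x \<bullet> y < r ^ 2" using a e True by (simp add: inner_diff_left inner_diff_right inner_commute)
    then have "(x \<bullet> y) ^ p < (r ^ 2) ^ p" using b0 assms(2) by (intro power_strict_mono) auto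
    then show ?thesis using a e True by simp
  next
    case False
    have "r ^ p \<noteq> s ^ p" using False r0 s0 assms(2) by (simp add: power_eq_iff_eq_base)
    then have "0 < (r ^ p - s ^ p)\<^sup>2" by simp
    also have "(r ^ p - s ^ p)\<^sup>2 = (r ^ 2) ^ p - 2 * (r * s) ^ p + (s ^ 2) ^ p"
      by (simp add: power2_eq_square power_mult_distrib algebra_simps flip: power_mult)
    finally show ?thesis using a e bp by simp
  qed
qed

lemma pow_nonneg2:
  fixes x y :: "'a::euclidean_space"
  shows "0 \<le> (x \<bullet> x) ^ p - 2 * (x \<bullet> y) ^ p + (y \<bullet> y) ^ p"
proof -
  have "0 \<le> (\<Sum>i<(2::nat). \<Sum>j<(2::nat). (\<lambda>i. if i = 0 then 1 else -1::real) i * (\<lambda>i. if i = 0 then 1 else -1::real) j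
           * ((\<lambda>i. if i = 0 then x else y) i \<bullet> (\<lambda>i. if i = 0 then x else y) j) ^ p)"
    by (rule pd_pow)
  also have "\<dots> = (x \<bullet> x) ^ p - 2 * (x \<bullet> y) ^ p + (y \<bullet> y) ^ p"
    by (simp add: numeral_2_eq_2 inner_commute)
  finally show ?thesis .
qed

lemma cont_mmult: "continuous_on UNIV (\<lambda>p::(real^'n^'n) \<times> (real^'n^'n). fst p ** snd p)"
  unfolding matrix_matrix_mult_def by (intro continuous_intros)

locale mfm =
  fixes N :: "'a measure" and c :: "'a \<Rightarrow> real^'n^'n" and S :: "real set"
  assumes cm: "c \<in> borel_measurable N"
    and cs: "\<And>x. x \<in> space N \<Longrightarrow> sym_mat (c x) \<and> mat_spectrum (c x) \<subseteq> S"
begin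

definition good :: "(real \<Rightarrow> real) \<Rightarrow> bool" where
  "good g \<longleftrightarrow> (\<lambda>x. matfun g (c x)) \<in> borel_measurable N"

lemma good_cong: "good g \<Longrightarrow> (\<And>t. t \<in> S \<Longrightarrow> g t = h t) \<Longrightarrow> good h"
  unfolding good_def
proof -
  assume g: "(\<lambda>x. matfun g (c x)) \<in> borel_measurable N" and e: "\<And>t. t \<in> S \<Longrightarrow> g t = h t"
  have "\<And>x. x \<in> space N \<Longrightarrow> matfun g (c x) = matfun h (c x)"
    using cs e by (intro mf_cong) blast
  then show "(\<lambda>x. matfun h (c x)) \<in> borel_measurable N" using g measurable_cong by metis
qed

lemma good_add: "good g \<Longrightarrow> good h \<Longrightarrow> good (\<lambda>t. g t + h t)"
  unfolding good_def mf_add by (rule borel_measurable_add)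

lemma good_scale: "good g \<Longrightarrow> good (\<lambda>t. a * g t)"
  unfolding good_def mf_scale by (intro borel_measurable_scaleR borel_measurable_const)

lemma good_mult: "good g \<Longrightarrow> good h \<Longrightarrow> good (\<lambda>t. g t * h t)"
proof -
  assume g: "good g" and h: "good h"
  have "(\<lambda>x. matfun g (c x) ** matfun h (c x)) \<in> borel_measurable N"
    using g h unfolding good_def
    by (intro borel_measurable_continuous_Pair[where H="\<lambda>A B. A ** B"]) (use cont_mmult in auto)
  moreover have "\<And>x. x \<in> space N \<Longrightarrow> matfun (\<lambda>t. g t * h t) (c x) = matfun g (c x) ** matfun h (c x)"
    using cs mf_mult by blast
  ultimately show ?thesis unfolding good_def using measurable_cong by (metis (no_types, lifting))
qed

lemma good_const: "good (\<lambda>t. a)"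
proof -
  have "\<And>x. x \<in> space N \<Longrightarrow> matfun (\<lambda>t. a) (c x) = a *\<^sub>R mat 1"
    using cs mf_const by blast
  moreover have "(\<lambda>x. a *\<^sub>R (mat 1::real^'n^'n)) \<in> borel_measurable N" by simp
  ultimately show ?thesis unfolding good_def
    using measurable_cong[of N "\<lambda>x. matfun (\<lambda>t. a) (c x)" "\<lambda>x. a *\<^sub>R mat 1"] by blast
qed

lemma good_id: "good (\<lambda>t. t)"
proof -
  have "\<And>x. x \<in> space N \<Longrightarrow> matfun (\<lambda>t. t) (c x) = c x"
    using cs mf_id by blast
  then show ?thesis unfolding good_def using measurable_cong cm by (metis (no_types, lifting))
qed

lemma good_poly: "real_polynomial_function p \<Longrightarrow> good p"
proof (induction rule: real_polynomial_function.induct)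
  case (linear f)
  then obtain k where "f = (\<lambda>t. t * k)" using real_bounded_linear by blast
  then have "f = (\<lambda>t. t * f 1)" by simp
  moreover have "good (\<lambda>t. f 1 * t)" by (rule good_scale[OF good_id])
  ultimately show ?case by (simp add: mult.commute)
next
  case (const c) then show ?case by (rule good_const)
next
  case (add f g) then show ?case by (intro good_add)
next
  case (mult f g) then show ?case by (intro good_mult)
qed

lemma good_lim:
  assumes G: "\<And>i. good (G i)" and lim: "\<And>t. t \<in> S \<Longrightarrow> (\<lambda>i. G i t) \<longlonglongrightarrow> g t"
  shows "good g"
  unfolding good_def
proof (rule borel_measurable_LIMSEQ_metric)
  show "(\<lambda>x. matfun (G i) (c x)) \<in> borel_measurable N" for i using G unfolding good_def by blast
  fix x assume x: "x \<in> space N"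
  show "(\<lambda>i. matfun (G i) (c x)) \<longlonglongrightarrow> matfun g (c x)"
    unfolding matfun_def using cs[OF x] lim by (intro tendsto_sum tendsto_scaleR tendsto_const) auto
qed

lemma good_cont:
  assumes "continuous_on UNIV g"
  shows "good g"
proof -
  have "\<exists>p. real_polynomial_function p \<and> (\<forall>t\<in>{-real n..real n}. \<bar>g t - p t\<bar> < 1 / (real n + 1))" for n
    using Stone_Weierstrass_real_polynomial_function[of "{-real n..real n}" g "1 / (real n + 1)"]
      continuous_on_subset[OF assms] by (metis compact_Icc subset_UNIV divide_pos_pos zero_less_one of_nat_less_of_nat_power_cancel_iff of_nat_0_less_iff of_nat_Suc zero_less_Suc add.commute)
  then obtain P where P: "\<And>n. real_polynomial_function (P n)"
    and Pa: "\<And>n t. t \<in> {-real n..real n} \<Longrightarrow> \<bar>g t - P n t\<bar> < 1 / (real n + 1)" by metis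
  show ?thesis
  proof (rule good_lim[of P])
    show "good (P i)" for i using P good_poly by blast
    fix t :: real
    show "(\<lambda>i. P i t) \<longlonglongrightarrow> g t"
    proof (rule LIMSEQ_I)
      fix r :: real assume r: "0 < r"
      obtain n0 :: nat where n0: "\<bar>t\<bar> \<le> real n0" "1 / (real n0 + 1) < r"
      proof -
        obtain k :: nat where k: "1 / r < real k" using reals_Archimedean2 by blast
        obtain j :: nat where j: "\<bar>t\<bar> \<le> real j" using real_arch_simple by blast
        have "1 / r < real (max k j) + 1" using k by linarith
        then have "1 < (real (max k j) + 1) * r" using r by (simp add: divide_less_eq)
        then have "1 / (real (max k j) + 1) < r" by (simp add: divide_less_eq mult.commute)
        moreover have "\<bar>t\<bar> \<le> real (max k j)" using j by simp
        ultimately show ?thesis using that by blast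
      qed
      show "\<exists>no. \<forall>n\<ge>no. norm (P n t - g t) < r"
      proof (intro exI allI impI)
        fix n assume "n0 \<le> n"
        then have "t \<in> {-real n..real n}" using n0(1) by auto
        then have "\<bar>g t - P n t\<bar> < 1 / (real n + 1)" by (rule Pa)
        also have "\<dots> \<le> 1 / (real n0 + 1)" using \<open>n0 \<le> n\<close> by (simp add: frac_le)
        finally show "norm (P n t - g t) < r" using n0(2) by simp
      qed
    qed
  qed
qed

end

context mfm begin

lemma good_sum: "finite I \<Longrightarrow> (\<And>i. i \<in> I \<Longrightarrow> good (g i)) \<Longrightarrow> good (\<lambda>t. \<Sum>i\<in>I. g i t)"
proof (induction I rule: finite_induct)
  case empty then show ?case using good_const[of 0] by simp
next
  case (insert x F) then show ?case by (simp add: good_add)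
qed

lemma good_open:
  assumes U: "open U"
  shows "good (indicator U)"
proof (cases "U = UNIV")
  case True
  then show ?thesis using good_const[of 1] by simp
next
  case False
  define G where "G = (\<lambda>(n::nat) t. min 1 (real n * infdist t (- U)))"
  show ?thesis
  proof (rule good_lim[of G])
    fix i
    have "continuous_on UNIV (G i)" unfolding G_def by (intro continuous_intros)
    then show "good (G i)" by (rule good_cont)
  next
    fix t :: real
    show "(\<lambda>i. G i t) \<longlonglongrightarrow> indicator U t"
    proof (cases "t \<in> U")
      case True
      have d: "infdist t (- U) > 0"
        using False True U by (intro infdist_pos_not_in_closed) auto
      obtain k :: nat where k: "1 / infdist t (- U) < real k" using reals_Archimedean2 by blast
      have "eventually (\<lambda>i. G i t = indicator U t) sequentially"
        unfolding eventually_sequentially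
      proof (intro exI allI impI)
        fix n assume "k \<le> n"
        then have "1 / infdist t (- U) < real n" using k by linarith
        then have "1 \<le> real n * infdist t (- U)" using d by (simp add: divide_less_eq)
        then show "G n t = indicator U t" using True unfolding G_def by simp
      qed
      then show ?thesis by (rule tendsto_eventually)
    next
      case False
      then have "G i t = indicator U t" for i unfolding G_def by simp
      then show ?thesis by simp
    qed
  qed
qed

lemma good_borel:
  assumes "A \<in> sets borel"
  shows "good (indicator A)"
proof -
  have "Int_stable {S::real set. open S}" by (auto simp: Int_stable_def)
  moreover have "{S::real set. open S} \<subseteq> Pow UNIV" by simp
  moreover have "A \<in> sigma_sets UNIV {S. open S}" using assms sets_borel by blast
  ultimately show ?thesis
  proof (induct A rule: sigma_sets_induct_disjoint)
    case (basic A) then show ?case using good_open by simp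
  next
    case empty then show ?case using good_const[of 0] by simp
  next
    case (compl A)
    have "good (\<lambda>t. 1 + (-1) * indicator A t)" using compl(2) by (intro good_add good_const good_scale)
    moreover have "(\<lambda>t. 1 + (-1) * indicator A t) = (indicator (UNIV - A) :: real \<Rightarrow> real)"
      by (rule ext) (auto simp: indicator_def)
    ultimately show ?case by simp
  next
    case (union A)
    show ?case
    proof (rule good_lim[of "\<lambda>n t. \<Sum>i<n. indicator (A i) t"])
      show "good (\<lambda>t. \<Sum>i<n. indicator (A i) t)" for n
        using union(3) by (intro good_sum) auto
      fix t :: real
      show "(\<lambda>n. \<Sum>i<n. indicator (A i) t) \<longlonglongrightarrow> (indicator (\<Union>i. A i) t :: real)"
      proof (cases "\<exists>i. t \<in> A i")
        case True
        then obtain i0 where i0: "t \<in> A i0" by blast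
        have uniq: "t \<notin> A j" if "j \<noteq> i0" for j
          using union(1) i0 that unfolding disjoint_family_on_def by blast
        have "eventually (\<lambda>n. (\<Sum>i<n. indicator (A i) t) = (indicator (\<Union>i. A i) t :: real)) sequentially"
          unfolding eventually_sequentially
        proof (intro exI allI impI)
          fix n assume "Suc i0 \<le> n"
          then have "(\<Sum>i<n. indicator (A i) t) = (\<Sum>i<n. if i = i0 then 1 else (0::real))"
            using uniq i0 by (intro sum.cong) (auto simp: indicator_def)
          also have "\<dots> = 1" using \<open>Suc i0 \<le> n\<close> by simp
          finally show "(\<Sum>i<n. indicator (A i) t) = (indicator (\<Union>i. A i) t :: real)" using i0 by (auto simp: indicator_def)
        qed
        then show ?thesis by (rule tendsto_eventually)
      next
        case False
        then show ?thesis by (simp add: indicator_def)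
      qed
    qed
  qed
qed

lemma good_meas:
  assumes f: "f \<in> borel_measurable (restrict_space borel S)"
  shows "good f"
proof -
  obtain F where F: "\<And>i. simple_function (restrict_space borel S) (F i)"
    and lim: "\<And>x. x \<in> space (restrict_space borel S) \<Longrightarrow> (\<lambda>i. F i x) \<longlonglongrightarrow> f x"
    using borel_measurable_implies_sequence_metric[OF f, of 0] by blast
  have sp: "space (restrict_space borel S) = S" by (simp add: space_restrict_space)
  have gF: "good (F i)" for i
  proof -
    let ?M = "restrict_space borel S"
    have fin: "finite (F i ` S)" using F[of i] sp unfolding simple_function_def by simp
    have "\<forall>y\<in>F i ` S. \<exists>B\<in>sets borel. F i -` {y} \<inter> S = S \<inter> B"
    proof
      fix y assume "y \<in> F i ` S"
      then have "F i -` {y} \<inter> space ?M \<in> sets ?M" using F[of i] sp by (auto simp: simple_function_def)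
      then have "F i -` {y} \<inter> S \<in> (\<inter>) S ` sets borel" using sp sets_restrict_space[of borel S] by simp
      then show "\<exists>B\<in>sets borel. F i -` {y} \<inter> S = S \<inter> B" by blast
    qed
    then obtain B where B0: "\<forall>y\<in>F i ` S. B y \<in> sets borel \<and> F i -` {y} \<inter> S = S \<inter> B y"
      using bchoice[of "F i ` S" "\<lambda>y B. B \<in> sets borel \<and> F i -` {y} \<inter> S = S \<inter> B"] by blast
    have B: "B y \<in> sets borel \<and> F i -` {y} \<inter> S = S \<inter> B y" if "y \<in> F i ` S" for y
      using B0 that by blast
    have "good (\<lambda>t. \<Sum>y\<in>F i ` S. y * indicator (B y) t)"
    proof (rule good_sum[OF fin])
      fix y assume "y \<in> F i ` S"
      then have "good (indicator (B y))" using B good_borel by blast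
      then show "good (\<lambda>t. y * indicator (B y) t)" by (rule good_scale)
    qed
    moreover have "(\<Sum>y\<in>F i ` S. y * indicator (B y) t) = F i t" if t: "t \<in> S" for t
    proof -
      have rep: "F i t = (\<Sum>y\<in>F i ` space ?M. indicator (F i -` {y} \<inter> space ?M) t *\<^sub>R y)"
        by (rule simple_function_indicator_representation_banach[OF F[of i]]) (simp add: sp t)
      have "F i t = (\<Sum>y\<in>F i ` S. indicator (F i -` {y} \<inter> S) t *\<^sub>R y)"
        using rep unfolding sp .
      also have "\<dots> = (\<Sum>y\<in>F i ` S. y * indicator (B y) t)"
      proof (rule sum.cong[OF refl])
        fix y assume y: "y \<in> F i ` S"
        have e: "F i -` {y} \<inter> S = S \<inter> B y" using B[OF y] by blast
        show "indicator (F i -` {y} \<inter> S) t *\<^sub>R y = y * indicator (B y) t"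
          unfolding e using t by (simp add: indicator_def)
      qed
      finally show ?thesis by simp
    qed
    ultimately show ?thesis by (rule good_cong)
  qed
  show ?thesis by (rule good_lim[OF gF]) (use lim sp in auto)
qed

end

lemma ser_props:
  fixes X Y :: "nat \<Rightarrow> 'a::real_inner" and c :: "nat \<Rightarrow> nat \<Rightarrow> real"
  assumes c0: "\<And>i p. 0 \<le> c i p"
    and sx: "\<And>i. summable (\<lambda>p. c i p * (X i \<bullet> X i) ^ p)"
    and hx: "(\<lambda>i. \<Sum>p. c i p * (X i \<bullet> X i) ^ p) sums hx"
    and sy: "\<And>i. summable (\<lambda>p. c i p * (Y i \<bullet> Y i) ^ p)"
    and hy: "(\<lambda>i. \<Sum>p. c i p * (Y i \<bullet> Y i) ^ p) sums hy"
  shows "(\<forall>i. summable (\<lambda>p. \<bar>c i p * (X i \<bullet> Y i) ^ p\<bar>))"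
    and "summable (\<lambda>i. \<Sum>p. \<bar>c i p * (X i \<bullet> Y i) ^ p\<bar>)"
    and "\<forall>i. summable (\<lambda>p. c i p * (X i \<bullet> Y i) ^ p)"
    and "summable (\<lambda>i. \<Sum>p. c i p * (X i \<bullet> Y i) ^ p)"
    and "\<bar>\<Sum>i. \<Sum>p. c i p * (X i \<bullet> Y i) ^ p\<bar> \<le> hx + hy"
proof -
  let ?f = "\<lambda>i p. c i p * (X i \<bullet> Y i) ^ p"
  let ?gx = "\<lambda>i p. c i p * (X i \<bullet> X i) ^ p"
  let ?gy = "\<lambda>i p. c i p * (Y i \<bullet> Y i) ^ p"
  have b: "\<bar>?f i p\<bar> \<le> ?gx i p + ?gy i p" for i p
  proof -
    have "\<bar>?f i p\<bar> = c i p * \<bar>X i \<bullet> Y i\<bar> ^ p" using c0 by (simp add: abs_mult power_abs)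
    also have "\<dots> \<le> c i p * ((X i \<bullet> X i) ^ p + (Y i \<bullet> Y i) ^ p)"
      using c0 pow_bound by (intro mult_left_mono) auto
    finally show ?thesis by (simp add: algebra_simps)
  qed
  have s1: "summable (\<lambda>p. \<bar>?f i p\<bar>)" for i
    by (rule summable_comparison_test'[of "\<lambda>p. ?gx i p + ?gy i p" 0]) (use b sx sy in \<open>auto intro: summable_add\<close>)
  then show "\<forall>i. summable (\<lambda>p. \<bar>?f i p\<bar>)" by blast
  have le1: "(\<Sum>p. \<bar>?f i p\<bar>) \<le> (\<Sum>p. ?gx i p) + (\<Sum>p. ?gy i p)" for i
    using suminf_le[OF b s1 summable_add[OF sx sy]] suminf_add[OF sx sy] by simp
  have nn1: "0 \<le> (\<Sum>p. \<bar>?f i p\<bar>)" for i using s1 by (intro suminf_nonneg) auto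
  have sxy: "summable (\<lambda>i. (\<Sum>p. ?gx i p) + (\<Sum>p. ?gy i p))"
    using hx hy by (intro summable_add sums_summable) auto
  have s2: "summable (\<lambda>i. \<Sum>p. \<bar>?f i p\<bar>)"
    by (rule summable_comparison_test'[OF sxy, of 0]) (use le1 nn1 in auto)
  then show "summable (\<lambda>i. \<Sum>p. \<bar>?f i p\<bar>)" .
  have s3: "summable (?f i)" for i using summable_rabs_cancel[OF s1] .
  then show "\<forall>i. summable (\<lambda>p. ?f i p)" by blast
  have le2: "\<bar>\<Sum>p. ?f i p\<bar> \<le> (\<Sum>p. \<bar>?f i p\<bar>)" for i using summable_rabs[OF s1] .
  have s4: "summable (\<lambda>i. \<bar>\<Sum>p. ?f i p\<bar>)"
    by (rule summable_comparison_test'[OF s2, of 0]) (use le2 in auto)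
  then show "summable (\<lambda>i. \<Sum>p. ?f i p)" by (rule summable_rabs_cancel)
  have "\<bar>\<Sum>i. \<Sum>p. ?f i p\<bar> \<le> (\<Sum>i. \<bar>\<Sum>p. ?f i p\<bar>)" using summable_rabs[OF s4] .
  also have "\<dots> \<le> (\<Sum>i. (\<Sum>p. ?gx i p) + (\<Sum>p. ?gy i p))"
    using le1 le2 by (intro suminf_le s4 sxy) (meson order_trans)
  also have "\<dots> = hx + hy"
    using hx hy by (simp add: sums_unique[symmetric] suminf_add[symmetric] sums_summable[OF hx] sums_summable[OF hy])
  finally show "\<bar>\<Sum>i. \<Sum>p. ?f i p\<bar> \<le> hx + hy" .
qed

lemma ser_nonneg:
  fixes X :: "nat \<Rightarrow> 'a::real_inner" and c :: "nat \<Rightarrow> nat \<Rightarrow> real"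
  assumes c0: "\<And>i p. 0 \<le> c i p"
    and sx: "\<And>i. summable (\<lambda>p. c i p * (X i \<bullet> X i) ^ p)"
    and hx: "(\<lambda>i. \<Sum>p. c i p * (X i \<bullet> X i) ^ p) sums hx"
  shows "0 \<le> hx"
proof -
  have nn: "0 \<le> (\<Sum>p. c i p * (X i \<bullet> X i) ^ p)" for i
    using sx c0 by (intro suminf_nonneg) auto
  show ?thesis by (rule sums_le[OF _ sums_zero hx]) (rule nn)
qed

lemma dswap:
  fixes g :: "nat \<Rightarrow> nat \<Rightarrow> nat \<Rightarrow> real"
  assumes s: "\<And>j l. j < m \<Longrightarrow> l < m \<Longrightarrow> summable (g j l)"
  shows "(\<Sum>j<m. \<Sum>l<m. a j * a l * suminf (g j l)) = (\<Sum>n. \<Sum>j<m. \<Sum>l<m. a j * a l * g j l n)"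
    and "summable (\<lambda>n. \<Sum>j<m. \<Sum>l<m. a j * a l * g j l n)"
proof -
  have s1: "summable (\<lambda>n. a j * a l * g j l n)" if "j < m" "l < m" for j l
    using s[OF that] by (rule summable_mult)
  have s2: "summable (\<lambda>n. \<Sum>l<m. a j * a l * g j l n)" if "j < m" for j
    by (rule summable_sum) (use s1 that in auto)
  show "summable (\<lambda>n. \<Sum>j<m. \<Sum>l<m. a j * a l * g j l n)"
    by (rule summable_sum) (use s2 in auto)
  have "(\<Sum>n. \<Sum>j<m. \<Sum>l<m. a j * a l * g j l n) = (\<Sum>j<m. \<Sum>n. \<Sum>l<m. a j * a l * g j l n)"
    by (rule suminf_sum) (use s2 in auto)
  also have "\<dots> = (\<Sum>j<m. \<Sum>l<m. \<Sum>n. a j * a l * g j l n)"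
    by (intro sum.cong refl, rule suminf_sum) (use s1 in auto)
  also have "\<dots> = (\<Sum>j<m. \<Sum>l<m. a j * a l * suminf (g j l))"
    using s by (intro sum.cong refl suminf_mult) auto
  finally show "(\<Sum>j<m. \<Sum>l<m. a j * a l * suminf (g j l)) = (\<Sum>n. \<Sum>j<m. \<Sum>l<m. a j * a l * g j l n)" ..
qed

lemma ser_pd:
  fixes Xs :: "nat \<Rightarrow> nat \<Rightarrow> 'a::euclidean_space" and c :: "nat \<Rightarrow> nat \<Rightarrow> real"
  assumes c0: "\<And>i p. 0 \<le> c i p"
    and sx: "\<And>j i. j < m \<Longrightarrow> summable (\<lambda>p. c i p * (Xs j i \<bullet> Xs j i) ^ p)"
    and hx: "\<And>j. j < m \<Longrightarrow> (\<lambda>i. \<Sum>p. c i p * (Xs j i \<bullet> Xs j i) ^ p) sums h j"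
  shows "0 \<le> (\<Sum>j<m. \<Sum>l<m. a j * a l * (\<Sum>i. \<Sum>p. c i p * (Xs j i \<bullet> Xs l i) ^ p))"
proof -
  have P: "(\<forall>i. summable (\<lambda>p. c i p * (Xs j i \<bullet> Xs l i) ^ p)) \<and>
      summable (\<lambda>i. \<Sum>p. c i p * (Xs j i \<bullet> Xs l i) ^ p)" if "j < m" "l < m" for j l
    using ser_props(3,4)[OF c0 sx[OF that(1)] hx[OF that(1)] sx[OF that(2)] hx[OF that(2)]] by blast
  have "(\<Sum>j<m. \<Sum>l<m. a j * a l * (\<Sum>i. \<Sum>p. c i p * (Xs j i \<bullet> Xs l i) ^ p)) =
        (\<Sum>i. \<Sum>j<m. \<Sum>l<m. a j * a l * (\<Sum>p. c i p * (Xs j i \<bullet> Xs l i) ^ p))"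
    using P by (intro dswap(1)) auto
  also have "\<dots> \<ge> 0"
  proof (rule suminf_nonneg)
    show "summable (\<lambda>i. \<Sum>j<m. \<Sum>l<m. a j * a l * (\<Sum>p. c i p * (Xs j i \<bullet> Xs l i) ^ p))"
      using P by (intro dswap(2)) auto
    fix i
    have "(\<Sum>j<m. \<Sum>l<m. a j * a l * (\<Sum>p. c i p * (Xs j i \<bullet> Xs l i) ^ p)) =
          (\<Sum>p. \<Sum>j<m. \<Sum>l<m. a j * a l * (c i p * (Xs j i \<bullet> Xs l i) ^ p))"
      using P by (intro dswap(1)) auto
    also have "\<dots> \<ge> 0"
    proof (rule suminf_nonneg)
      show "summable (\<lambda>p. \<Sum>j<m. \<Sum>l<m. a j * a l * (c i p * (Xs j i \<bullet> Xs l i) ^ p))"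
        using P by (intro dswap(2)) auto
      fix p
      have "(\<Sum>j<m. \<Sum>l<m. a j * a l * (c i p * (Xs j i \<bullet> Xs l i) ^ p)) =
            c i p * (\<Sum>j<m. \<Sum>l<m. a j * a l * (Xs j i \<bullet> Xs l i) ^ p)"
        by (simp add: sum_distrib_left mult_ac)
      also have "\<dots> \<ge> 0" using c0 pd_pow[where m=m and a=a and x="\<lambda>j. Xs j i" and p=p] by simp
      finally show "0 \<le> (\<Sum>j<m. \<Sum>l<m. a j * a l * (c i p * (Xs j i \<bullet> Xs l i) ^ p))" .
    qed
    finally show "0 \<le> (\<Sum>j<m. \<Sum>l<m. a j * a l * (\<Sum>p. c i p * (Xs j i \<bullet> Xs l i) ^ p))" .
  qed
  finally show ?thesis .
qed

lemma ser_strict: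
  fixes X Y :: "nat \<Rightarrow> 'a::euclidean_space" and c :: "nat \<Rightarrow> nat \<Rightarrow> real"
  assumes c0: "\<And>i p. 0 \<le> c i p"
    and sx: "\<And>i. summable (\<lambda>p. c i p * (X i \<bullet> X i) ^ p)"
    and hx: "(\<lambda>i. \<Sum>p. c i p * (X i \<bullet> X i) ^ p) sums hx"
    and sy: "\<And>i. summable (\<lambda>p. c i p * (Y i \<bullet> Y i) ^ p)"
    and hy: "(\<lambda>i. \<Sum>p. c i p * (Y i \<bullet> Y i) ^ p) sums hy"
  shows "0 \<le> hx - 2 * (\<Sum>i. \<Sum>p. c i p * (X i \<bullet> Y i) ^ p) + hy"
    and "0 < c i0 p0 \<Longrightarrow> 1 \<le> p0 \<Longrightarrow> X i0 \<noteq> Y i0 \<Longrightarrow> (odd p0 \<or> 0 \<le> X i0 \<bullet> Y i0) \<Longrightarrow>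
         0 < hx - 2 * (\<Sum>i. \<Sum>p. c i p * (X i \<bullet> Y i) ^ p) + hy"
proof -
  let ?d = "\<lambda>i p. c i p * ((X i \<bullet> X i) ^ p - 2 * (X i \<bullet> Y i) ^ p + (Y i \<bullet> Y i) ^ p)"
  have sxy: "\<forall>i. summable (\<lambda>p. c i p * (X i \<bullet> Y i) ^ p)" "summable (\<lambda>i. \<Sum>p. c i p * (X i \<bullet> Y i) ^ p)"
    using ser_props(3,4)[OF c0 sx hx sy hy] by auto
  have sd: "summable (?d i)" for i
  proof -
    have "summable (\<lambda>p. c i p * (X i \<bullet> X i) ^ p - 2 * (c i p * (X i \<bullet> Y i) ^ p) + c i p * (Y i \<bullet> Y i) ^ p)"
      using sx sy sxy by (intro summable_add summable_diff summable_mult) auto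
    then show ?thesis by (simp add: algebra_simps)
  qed
  have ed: "(\<Sum>p. ?d i p) = (\<Sum>p. c i p * (X i \<bullet> X i) ^ p) - 2 * (\<Sum>p. c i p * (X i \<bullet> Y i) ^ p) + (\<Sum>p. c i p * (Y i \<bullet> Y i) ^ p)" for i
  proof -
    have "(\<Sum>p. c i p * (X i \<bullet> X i) ^ p) - 2 * (\<Sum>p. c i p * (X i \<bullet> Y i) ^ p) + (\<Sum>p. c i p * (Y i \<bullet> Y i) ^ p)
        = (\<Sum>p. c i p * (X i \<bullet> X i) ^ p - 2 * (c i p * (X i \<bullet> Y i) ^ p) + c i p * (Y i \<bullet> Y i) ^ p)"
    proof -
      have sB: "summable (\<lambda>p. 2 * (c i p * (X i \<bullet> Y i) ^ p))" using sxy by (intro summable_mult) auto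
      have sAB: "summable (\<lambda>p. c i p * (X i \<bullet> X i) ^ p - 2 * (c i p * (X i \<bullet> Y i) ^ p))"
        using sx sB by (rule summable_diff)
      show ?thesis
        using suminf_add[OF sAB sy] suminf_diff[OF sx sB] suminf_mult[of "\<lambda>p. c i p * (X i \<bullet> Y i) ^ p" 2] sxy
        by simp
    qed
    then show ?thesis by (simp add: algebra_simps)
  qed
  have sh: "summable (\<lambda>i. \<Sum>p. c i p * (X i \<bullet> X i) ^ p)" "summable (\<lambda>i. \<Sum>p. c i p * (Y i \<bullet> Y i) ^ p)"
    using hx hy sums_summable by auto
  have sD: "summable (\<lambda>i. \<Sum>p. ?d i p)"
    unfolding ed using sh sxy by (intro summable_add summable_diff summable_mult) auto
  have eD: "(\<Sum>i. \<Sum>p. ?d i p) = hx - 2 * (\<Sum>i. \<Sum>p. c i p * (X i \<bullet> Y i) ^ p) + hy"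
  proof -
    have "(\<Sum>i. \<Sum>p. ?d i p) = (\<Sum>i. \<Sum>p. c i p * (X i \<bullet> X i) ^ p) - 2 * (\<Sum>i. \<Sum>p. c i p * (X i \<bullet> Y i) ^ p) + (\<Sum>i. \<Sum>p. c i p * (Y i \<bullet> Y i) ^ p)"
      unfolding ed
    proof -
      let ?A = "\<lambda>i. \<Sum>p. c i p * (X i \<bullet> X i) ^ p" and ?B = "\<lambda>i. \<Sum>p. c i p * (X i \<bullet> Y i) ^ p"
        and ?C = "\<lambda>i. \<Sum>p. c i p * (Y i \<bullet> Y i) ^ p"
      have sB: "summable (\<lambda>i. 2 * ?B i)" using sxy by (intro summable_mult) auto
      have sAB: "summable (\<lambda>i. ?A i - 2 * ?B i)" using sh(1) sB by (rule summable_diff)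
      show "(\<Sum>i. ?A i - 2 * ?B i + ?C i) = suminf ?A - 2 * suminf ?B + suminf ?C"
        using suminf_add[OF sAB sh(2)] suminf_diff[OF sh(1) sB] suminf_mult[of ?B 2] sxy
        by simp
    qed
    then show ?thesis using sums_unique[OF hx] sums_unique[OF hy] by simp
  qed
  have dn: "0 \<le> ?d i p" for i p using c0 pow_nonneg2 by (intro mult_nonneg_nonneg) auto
  have Dn: "0 \<le> (\<Sum>p. ?d i p)" for i using sd dn by (intro suminf_nonneg)
  show "0 \<le> hx - 2 * (\<Sum>i. \<Sum>p. c i p * (X i \<bullet> Y i) ^ p) + hy"
    using suminf_nonneg[OF sD Dn] eD by simp
  assume a: "0 < c i0 p0" "1 \<le> p0" "X i0 \<noteq> Y i0" "odd p0 \<or> 0 \<le> X i0 \<bullet> Y i0"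
  have "0 < ?d i0 p0" using a pow_strict[OF a(3) a(2) a(4)] by simp
  also have "?d i0 p0 \<le> (\<Sum>p. ?d i0 p)"
    using sum_le_suminf[OF sd[of i0], of "{p0}"] dn by simp
  also have "\<dots> \<le> (\<Sum>i. \<Sum>p. ?d i p)"
    using sum_le_suminf[OF sD, of "{i0}"] Dn by simp
  finally show "0 < hx - 2 * (\<Sum>i. \<Sum>p. c i p * (X i \<bullet> Y i) ^ p) + hy" using eD by simp
qed

lemma meas_series:
  fixes F1 F2 :: "nat \<Rightarrow> 'a \<Rightarrow> 'b::euclidean_space" and c :: "nat \<Rightarrow> nat \<Rightarrow> real"
  assumes m1: "\<And>i. F1 i \<in> borel_measurable M" and m2: "\<And>i. F2 i \<in> borel_measurable M"
    and s: "\<And>x. x \<in> space M \<Longrightarrow> (\<forall>i. summable (\<lambda>p. c i p * (F1 i x \<bullet> F2 i x) ^ p)) \<and>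
                summable (\<lambda>i. \<Sum>p. c i p * (F1 i x \<bullet> F2 i x) ^ p)"
  shows "(\<lambda>x. \<Sum>i. \<Sum>p. c i p * (F1 i x \<bullet> F2 i x) ^ p) \<in> borel_measurable M"
proof -
  have inner: "(\<lambda>x. \<Sum>p. c i p * (F1 i x \<bullet> F2 i x) ^ p) \<in> borel_measurable M" for i
  proof (rule borel_measurable_LIMSEQ_metric)
    show "(\<lambda>x. \<Sum>p<n. c i p * (F1 i x \<bullet> F2 i x) ^ p) \<in> borel_measurable M" for n
      using m1 m2 by measurable
    fix x assume "x \<in> space M"
    then show "(\<lambda>n. \<Sum>p<n. c i p * (F1 i x \<bullet> F2 i x) ^ p) \<longlonglongrightarrow> (\<Sum>p. c i p * (F1 i x \<bullet> F2 i x) ^ p)"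
      using s summable_LIMSEQ by blast
  qed
  show ?thesis
  proof (rule borel_measurable_LIMSEQ_metric)
    show "(\<lambda>x. \<Sum>i<n. \<Sum>p. c i p * (F1 i x \<bullet> F2 i x) ^ p) \<in> borel_measurable M" for n
      using inner by (intro borel_measurable_sum) auto
    fix x assume "x \<in> space M"
    then show "(\<lambda>n. \<Sum>i<n. \<Sum>p. c i p * (F1 i x \<bullet> F2 i x) ^ p) \<longlonglongrightarrow> (\<Sum>i. \<Sum>p. c i p * (F1 i x \<bullet> F2 i x) ^ p)"
      using s summable_LIMSEQ by blast
  qed
qed

lemma kterm_eq: "kterm c f C1 C2 i p = c i p * (matfun (f i) C1 \<bullet> matfun (f i) C2) ^ p"
  unfolding kterm_def trace_mf ..

lemma ktilde_eq: "ktilde c f C1 C2 = (\<Sum>i. \<Sum>p. c i p * (matfun (f i) C1 \<bullet> matfun (f i) C2) ^ p)"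
  unfolding ktilde_def kterm_eq ..

lemma int_dsum:
  fixes K :: "nat \<Rightarrow> nat \<Rightarrow> 'a \<Rightarrow> real"
  assumes "\<And>i j. i < m \<Longrightarrow> j < m \<Longrightarrow> integrable M (K i j)"
  shows "integral\<^sup>L M (\<lambda>x. \<Sum>i<m. \<Sum>j<m. a i * a j * K i j x) = (\<Sum>i<m. \<Sum>j<m. a i * a j * integral\<^sup>L M (K i j))"
proof -
  have "integral\<^sup>L M (\<lambda>x. \<Sum>i<m. \<Sum>j<m. a i * a j * K i j x) = (\<Sum>i<m. integral\<^sup>L M (\<lambda>x. \<Sum>j<m. a i * a j * K i j x))"
    by (rule Bochner_Integration.integral_sum) (use assms in \<open>auto intro!: Bochner_Integration.integrable_sum\<close>)
  also have "\<dots> = (\<Sum>i<m. \<Sum>j<m. integral\<^sup>L M (\<lambda>x. a i * a j * K i j x))"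
    by (intro sum.cong refl Bochner_Integration.integral_sum) (use assms in auto)
  also have "\<dots> = (\<Sum>i<m. \<Sum>j<m. a i * a j * integral\<^sup>L M (K i j))" by simp
  finally show ?thesis .
qed

theorem theorem1:
  fixes \<Omega> :: "(real^'n) set"
    and \<beta> Re Wi \<theta> c0 :: real
    and s :: "real^'n^'n \<Rightarrow> real^'n^'n"
    and D :: "(real^'n^'n) set"
    and f :: "nat \<Rightarrow> real \<Rightarrow> real"
    and c :: "nat \<Rightarrow> nat \<Rightarrow> real"
  assumes \<Omega>_meas: "\<Omega> \<in> sets lebesgue"
    and \<beta>: "0 < \<beta>" "\<beta> < 1"
    and Re: "0 < Re" and Wi: "0 < Wi"
    and \<theta>_def: "\<theta> = (1 - \<beta>) / (Re * Wi)"
    and D_psd: "\<forall>C\<in>D. psd_mat C"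
    and s_sym: "\<forall>C\<in>D. sym_mat (s C)"
    and c0: "0 \<le> c0"
    and f_meas: "\<forall>i. f i \<in> borel_measurable (restrict_space borel (spec_set D))"
    and c_nonneg: "\<forall>i p. 0 \<le> c i p"
    and h_series: "\<forall>C\<in>D.
          (\<forall>i. summable (\<lambda>p. c i p * (trace (matfun (f i) C ** matfun (f i) C)) ^ p)) \<and>
          (\<lambda>i. \<Sum>p. c i p * (trace (matfun (f i) C ** matfun (f i) C)) ^ p)
             sums (hfun Wi c0 s C)"
  shows "(\<forall>C1\<in>D. \<forall>C2\<in>D.
            (\<forall>i. summable (\<lambda>p. \<bar>kterm c f C1 C2 i p\<bar>)) \<and>
            summable (\<lambda>i. \<Sum>p. \<bar>kterm c f C1 C2 i p\<bar>))
    \<and> (\<forall>q1\<in>finite_states \<Omega> D \<theta> (hfun Wi c0 s). \<forall>q2\<in>finite_states \<Omega> D \<theta> (hfun Wi c0 s).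
            integrable (lebesgue_on \<Omega>) (kintegrand \<theta> (ktilde c f) q1 q2))
    \<and> pos_def_kernel (finite_states \<Omega> D \<theta> (hfun Wi c0 s)) (kernel \<Omega> \<theta> (ktilde c f))
    \<and> (\<forall>q\<in>finite_states \<Omega> D \<theta> (hfun Wi c0 s).
            energy \<Omega> \<theta> (hfun Wi c0 s) q = kernel \<Omega> \<theta> (ktilde c f) q q)
    \<and> ((\<exists>i p. 0 < c i p \<and> 1 \<le> p \<and> inj_on (f i) (spec_set D) \<and>
              (odd p \<or> (\<forall>x\<in>spec_set D. 0 \<le> f i x))) \<longrightarrow>
        (\<forall>q1\<in>finite_states \<Omega> D \<theta> (hfun Wi c0 s). \<forall>q2\<in>finite_states \<Omega> D \<theta> (hfun Wi c0 s).
            \<not> state_ae_eq \<Omega> q1 q2 \<longrightarrow>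
            0 < kernel \<Omega> \<theta> (ktilde c f) q1 q1 - 2 * kernel \<Omega> \<theta> (ktilde c f) q1 q2
                + kernel \<Omega> \<theta> (ktilde c f) q2 q2))"
proof -
  let ?h = "hfun Wi c0 s" and ?kt = "ktilde c f" and ?FS = "finite_states \<Omega> D \<theta> (hfun Wi c0 s)"
  define X where "X = (\<lambda>(C::real^'n^'n) i. matfun (f i) C)"
  have th0: "0 < \<theta>" unfolding \<theta>_def using \<beta> Re Wi by simp
  have c0': "\<And>i p. 0 \<le> c i p" using c_nonneg by blast
  have symD: "sym_mat C" if "C \<in> D" for C using D_psd that unfolding psd_mat_def by blast
  have kt_eq: "?kt C1 C2 = (\<Sum>i. \<Sum>p. c i p * (X C1 i \<bullet> X C2 i) ^ p)" for C1 C2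
    unfolding ktilde_eq X_def ..
  have kterm_eqX: "kterm c f C1 C2 i p = c i p * (X C1 i \<bullet> X C2 i) ^ p" for C1 C2 i p
    unfolding kterm_eq X_def ..
  have hs1: "\<And>i. summable (\<lambda>p. c i p * (X C i \<bullet> X C i) ^ p)" if "C \<in> D" for C
    using h_series that unfolding X_def trace_mf by blast
  have hs2: "(\<lambda>i. \<Sum>p. c i p * (X C i \<bullet> X C i) ^ p) sums ?h C" if "C \<in> D" for C
    using h_series that unfolding X_def trace_mf by blast
  have h_nn: "0 \<le> ?h C" if "C \<in> D" for C using ser_nonneg[OF c0' hs1[OF that] hs2[OF that]] .
  have kt_diag: "?kt C C = ?h C" if "C \<in> D" for C
    unfolding kt_eq using sums_unique[OF hs2[OF that]] by simp
  have kt_bound: "\<bar>?kt C1 C2\<bar> \<le> ?h C1 + ?h C2" if "C1 \<in> D" "C2 \<in> D" for C1 C2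
    unfolding kt_eq using ser_props(5)[OF c0' hs1[OF that(1)] hs2[OF that(1)] hs1[OF that(2)] hs2[OF that(2)]] .
  have P1: "\<forall>C1\<in>D. \<forall>C2\<in>D. (\<forall>i. summable (\<lambda>p. \<bar>kterm c f C1 C2 i p\<bar>)) \<and>
            summable (\<lambda>i. \<Sum>p. \<bar>kterm c f C1 C2 i p\<bar>)"
    unfolding kterm_eqX using ser_props(1,2)[OF c0' hs1 hs2 hs1 hs2] by blast
  have FS: "fst q \<in> borel_measurable (lebesgue_on \<Omega>) \<and> snd q \<in> borel_measurable (lebesgue_on \<Omega>) \<and>
      (\<forall>x\<in>\<Omega>. snd q x \<in> D) \<and>
      integrable (lebesgue_on \<Omega>) (\<lambda>x. (norm (fst q x))\<^sup>2 + \<theta> * ?h (snd q x))" if "q \<in> ?FS" for q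
    using that unfolding finite_states_def by blast
  have Xmeas: "(\<lambda>x. X (snd q x) i) \<in> borel_measurable (lebesgue_on \<Omega>)" if q: "q \<in> ?FS" for q i
  proof -
    interpret mfm "lebesgue_on \<Omega>" "snd q" "spec_set D"
    proof
      show "snd q \<in> borel_measurable (lebesgue_on \<Omega>)" using FS[OF q] by blast
      fix x assume "x \<in> space (lebesgue_on \<Omega>)"
      then have "snd q x \<in> D" using FS[OF q] by simp
      then show "sym_mat (snd q x) \<and> mat_spectrum (snd q x) \<subseteq> spec_set D"
        using symD unfolding spec_set_def by blast
    qed
    have "good (f i)" using f_meas good_meas by blast
    then show ?thesis unfolding good_def X_def .
  qed
  have ktmeas: "(\<lambda>x. ?kt (snd q1 x) (snd q2 x)) \<in> borel_measurable (lebesgue_on \<Omega>)"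
    if q1: "q1 \<in> ?FS" and q2: "q2 \<in> ?FS" for q1 q2
    unfolding kt_eq
  proof (rule meas_series[where ?F1.0="\<lambda>i x. X (snd q1 x) i" and ?F2.0="\<lambda>i x. X (snd q2 x) i"])
    show "(\<lambda>x. X (snd q1 x) i) \<in> borel_measurable (lebesgue_on \<Omega>)" for i using Xmeas[OF q1] .
    show "(\<lambda>x. X (snd q2 x) i) \<in> borel_measurable (lebesgue_on \<Omega>)" for i using Xmeas[OF q2] .
    fix x assume "x \<in> space (lebesgue_on \<Omega>)"
    then have xO: "x \<in> \<Omega>" by simp
    have d1: "snd q1 x \<in> D" using FS[OF q1] xO by blast
    have d2: "snd q2 x \<in> D" using FS[OF q2] xO by blast
    show "(\<forall>i. summable (\<lambda>p. c i p * (X (snd q1 x) i \<bullet> X (snd q2 x) i) ^ p)) \<and>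
       summable (\<lambda>i. \<Sum>p. c i p * (X (snd q1 x) i \<bullet> X (snd q2 x) i) ^ p)"
      using ser_props(3,4)[OF c0' hs1[OF d1] hs2[OF d1] hs1[OF d2] hs2[OF d2]] by blast
  qed
  have kimeas: "kintegrand \<theta> ?kt q1 q2 \<in> borel_measurable (lebesgue_on \<Omega>)"
    if q1: "q1 \<in> ?FS" and q2: "q2 \<in> ?FS" for q1 q2
  proof -
    have "(\<lambda>x. fst q1 x \<bullet> fst q2 x + \<theta> * ?kt (snd q1 x) (snd q2 x)) \<in> borel_measurable (lebesgue_on \<Omega>)"
      using FS[OF q1] FS[OF q2] ktmeas[OF q1 q2]
      by (intro borel_measurable_add borel_measurable_inner borel_measurable_times borel_measurable_const) auto
    then show ?thesis unfolding kintegrand_def[abs_def] .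
  qed
  have kiint: "integrable (lebesgue_on \<Omega>) (kintegrand \<theta> ?kt q1 q2)"
    if q1: "q1 \<in> ?FS" and q2: "q2 \<in> ?FS" for q1 q2
  proof (rule Bochner_Integration.integrable_bound)
    let ?E = "\<lambda>q x. (norm (fst q x))\<^sup>2 + \<theta> * ?h (snd q x)"
    show "integrable (lebesgue_on \<Omega>) (\<lambda>x. ?E q1 x + ?E q2 x)"
      by (rule Bochner_Integration.integrable_add) (use FS[OF q1] FS[OF q2] in auto)
    show "kintegrand \<theta> ?kt q1 q2 \<in> borel_measurable (lebesgue_on \<Omega>)" by (rule kimeas[OF q1 q2])
    show "AE x in lebesgue_on \<Omega>. norm (kintegrand \<theta> ?kt q1 q2 x) \<le> norm (?E q1 x + ?E q2 x)"
    proof (rule AE_I2)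
      fix x assume "x \<in> space (lebesgue_on \<Omega>)"
      then have D1: "snd q1 x \<in> D" and D2: "snd q2 x \<in> D" using FS[OF q1] FS[OF q2] by auto
      have u: "\<bar>fst q1 x \<bullet> fst q2 x\<bar> \<le> (norm (fst q1 x))\<^sup>2 + (norm (fst q2 x))\<^sup>2"
        using pow_bound[of "fst q1 x" "fst q2 x" 1] by (simp add: power2_norm_eq_inner)
      have k: "\<bar>\<theta> * ?kt (snd q1 x) (snd q2 x)\<bar> \<le> \<theta> * ?h (snd q1 x) + \<theta> * ?h (snd q2 x)"
        using kt_bound[OF D1 D2] th0 by (simp add: abs_mult distrib_left[symmetric])
      have nn: "0 \<le> ?E q1 x + ?E q2 x" using h_nn[OF D1] h_nn[OF D2] th0 by simp
      show "norm (kintegrand \<theta> ?kt q1 q2 x) \<le> norm (?E q1 x + ?E q2 x)"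
        unfolding kintegrand_def using u k nn by (simp add: abs_le_iff)
    qed
  qed
  have P2: "\<forall>q1\<in>?FS. \<forall>q2\<in>?FS. integrable (lebesgue_on \<Omega>) (kintegrand \<theta> ?kt q1 q2)"
    using kiint by blast
  have P3: "pos_def_kernel ?FS (kernel \<Omega> \<theta> ?kt)"
    unfolding pos_def_kernel_def
  proof (intro allI impI)
    fix m and xs :: "nat \<Rightarrow> 'n state" and a :: "nat \<Rightarrow> real"
    assume xs: "\<forall>i<m. xs i \<in> ?FS"
    have "(\<Sum>i<m. \<Sum>j<m. a i * a j * kernel \<Omega> \<theta> ?kt (xs i) (xs j)) =
          1/2 * (\<Sum>i<m. \<Sum>j<m. a i * a j * (LINT x|lebesgue_on \<Omega>. kintegrand \<theta> ?kt (xs i) (xs j) x))"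
      by (simp add: kernel_def sum_distrib_left mult_ac)
    also have "\<dots> = 1/2 * (LINT x|lebesgue_on \<Omega>. (\<Sum>i<m. \<Sum>j<m. a i * a j * kintegrand \<theta> ?kt (xs i) (xs j) x))"
      using xs kiint by (subst int_dsum) auto
    also have "\<dots> \<ge> 0"
    proof -
      have "0 \<le> (LINT x|lebesgue_on \<Omega>. (\<Sum>i<m. \<Sum>j<m. a i * a j * kintegrand \<theta> ?kt (xs i) (xs j) x))"
      proof (rule Bochner_Integration.integral_nonneg)
        fix x assume "x \<in> space (lebesgue_on \<Omega>)"
        then have Dx: "\<And>i. i < m \<Longrightarrow> snd (xs i) x \<in> D" using FS xs by auto
        have e: "(\<Sum>i<m. \<Sum>j<m. a i * a j * kintegrand \<theta> ?kt (xs i) (xs j) x) =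
            (\<Sum>i<m. \<Sum>j<m. a i * a j * (fst (xs i) x \<bullet> fst (xs j) x) ^ 1) +
            \<theta> * (\<Sum>i<m. \<Sum>j<m. a i * a j * (\<Sum>k. \<Sum>p. c k p * (X (snd (xs i) x) k \<bullet> X (snd (xs j) x) k) ^ p))"
          by (simp add: kintegrand_def kt_eq distrib_left sum.distrib sum_distrib_left mult_ac)
        have A: "0 \<le> (\<Sum>i<m. \<Sum>j<m. a i * a j * (fst (xs i) x \<bullet> fst (xs j) x) ^ 1)"
          by (rule pd_pow)
        have B: "0 \<le> (\<Sum>i<m. \<Sum>j<m. a i * a j * (\<Sum>k. \<Sum>p. c k p * (X (snd (xs i) x) k \<bullet> X (snd (xs j) x) k) ^ p))"
          by (rule ser_pd[where h="\<lambda>j. ?h (snd (xs j) x)"]) (use c0' hs1 hs2 Dx in auto)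
        show "0 \<le> (\<Sum>i<m. \<Sum>j<m. a i * a j * kintegrand \<theta> ?kt (xs i) (xs j) x)"
          unfolding e using A B th0 by simp
      qed
      then show ?thesis by simp
    qed
    finally show "0 \<le> (\<Sum>i<m. \<Sum>j<m. a i * a j * kernel \<Omega> \<theta> ?kt (xs i) (xs j))" .
  qed
  have P4: "\<forall>q\<in>?FS. energy \<Omega> \<theta> ?h q = kernel \<Omega> \<theta> ?kt q q"
  proof
    fix q assume q: "q \<in> ?FS"
    show "energy \<Omega> \<theta> ?h q = kernel \<Omega> \<theta> ?kt q q"
      unfolding energy_def kernel_def
    proof (intro arg_cong[where f="\<lambda>t. 1/2 * t"] Bochner_Integration.integral_cong refl)
      fix x assume "x \<in> space (lebesgue_on \<Omega>)"
      then have "snd q x \<in> D" using FS[OF q] by auto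
      then show "(norm (fst q x))\<^sup>2 + \<theta> * ?h (snd q x) = kintegrand \<theta> ?kt q q x"
        unfolding kintegrand_def using kt_diag by (simp add: power2_norm_eq_inner)
    qed
  qed
  have P5: "(\<exists>i p. 0 < c i p \<and> 1 \<le> p \<and> inj_on (f i) (spec_set D) \<and>
              (odd p \<or> (\<forall>x\<in>spec_set D. 0 \<le> f i x))) \<longrightarrow>
        (\<forall>q1\<in>?FS. \<forall>q2\<in>?FS. \<not> state_ae_eq \<Omega> q1 q2 \<longrightarrow>
            0 < kernel \<Omega> \<theta> ?kt q1 q1 - 2 * kernel \<Omega> \<theta> ?kt q1 q2 + kernel \<Omega> \<theta> ?kt q2 q2)"
  proof (rule impI, intro ballI)
    assume "\<exists>i p. 0 < c i p \<and> 1 \<le> p \<and> inj_on (f i) (spec_set D) \<and>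
              (odd p \<or> (\<forall>x\<in>spec_set D. 0 \<le> f i x))"
    then obtain i0 p0 where cpos: "0 < c i0 p0" and p1: "1 \<le> p0" and inj: "inj_on (f i0) (spec_set D)"
      and cond: "odd p0 \<or> (\<forall>x\<in>spec_set D. 0 \<le> f i0 x)" by blast
    fix q1 q2 assume q1: "q1 \<in> ?FS" and q2: "q2 \<in> ?FS"
    show "\<not> state_ae_eq \<Omega> q1 q2 \<longrightarrow>
            0 < kernel \<Omega> \<theta> ?kt q1 q1 - 2 * kernel \<Omega> \<theta> ?kt q1 q2 + kernel \<Omega> \<theta> ?kt q2 q2"
    proof
      assume nae: "\<not> state_ae_eq \<Omega> q1 q2"
      define G where "G = (\<lambda>x. kintegrand \<theta> ?kt q1 q1 x - 2 * kintegrand \<theta> ?kt q1 q2 x + kintegrand \<theta> ?kt q2 q2 x)"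
      have Gint: "integrable (lebesgue_on \<Omega>) G"
        unfolding G_def using kiint[OF q1 q1] kiint[OF q1 q2] kiint[OF q2 q2] by auto
      have eqk: "kernel \<Omega> \<theta> ?kt q1 q1 - 2 * kernel \<Omega> \<theta> ?kt q1 q2 + kernel \<Omega> \<theta> ?kt q2 q2 =
            1/2 * (LINT x|lebesgue_on \<Omega>. G x)"
        unfolding G_def kernel_def using kiint[OF q1 q1] kiint[OF q1 q2] kiint[OF q2 q2] by simp
      have Gprop: "0 \<le> G x \<and> (G x = 0 \<longrightarrow> fst q1 x = fst q2 x \<and> snd q1 x = snd q2 x)"
        if x: "x \<in> space (lebesgue_on \<Omega>)" for x
      proof -
        have xO: "x \<in> \<Omega>" using x by simp
        have D1: "snd q1 x \<in> D" using FS[OF q1] xO by blast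
        have D2: "snd q2 x \<in> D" using FS[OF q2] xO by blast
        let ?C1 = "snd q1 x" and ?C2 = "snd q2 x"
        let ?T = "?h ?C1 - 2 * (\<Sum>i. \<Sum>p. c i p * (X ?C1 i \<bullet> X ?C2 i) ^ p) + ?h ?C2"
        note SS = ser_strict[OF c0' hs1[OF D1] hs2[OF D1] hs1[OF D2] hs2[OF D2]]
        have Geq: "G x = (norm (fst q1 x - fst q2 x))\<^sup>2 + \<theta> * ?T"
          unfolding G_def kintegrand_def kt_diag[OF D1] kt_diag[OF D2]
          by (simp add: kt_eq[of ?C1 ?C2] power2_norm_eq_inner inner_diff_left inner_diff_right inner_commute algebra_simps)
        have T0: "0 \<le> ?T" using SS(1) .
        have Tpos: "0 < ?T" if ne: "?C1 \<noteq> ?C2"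
        proof -
          have sub: "mat_spectrum ?C1 \<union> mat_spectrum ?C2 \<subseteq> spec_set D"
            using D1 D2 unfolding spec_set_def by blast
          have "X ?C1 i0 \<noteq> X ?C2 i0"
          proof
            assume "X ?C1 i0 = X ?C2 i0"
            then have "?C1 = ?C2" unfolding X_def
              using mf_inj[OF symD[OF D1] symD[OF D2] inj_on_subset[OF inj sub]] by blast
            then show False using ne by blast
          qed
          moreover have "odd p0 \<or> 0 \<le> X ?C1 i0 \<bullet> X ?C2 i0"
            using cond mf_dot_nonneg[of ?C1 ?C2 "f i0"] sub unfolding X_def by blast
          ultimately show ?thesis using SS(2)[OF cpos p1] by blast
        qed
        show ?thesis
        proof
          show "0 \<le> G x" unfolding Geq using T0 th0 by simp
          show "G x = 0 \<longrightarrow> fst q1 x = fst q2 x \<and> snd q1 x = snd q2 x"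
          proof
            assume G0: "G x = 0"
            have a: "0 \<le> (norm (fst q1 x - fst q2 x))\<^sup>2" by simp
            have b: "0 \<le> \<theta> * ?T" using T0 th0 by simp
            have "(norm (fst q1 x - fst q2 x))\<^sup>2 = 0" using G0 a b Geq by linarith
            then have "fst q1 x = fst q2 x" by simp
            moreover have "snd q1 x = snd q2 x"
            proof (rule ccontr)
              assume "snd q1 x \<noteq> snd q2 x"
              then have "0 < \<theta> * ?T" using Tpos th0 by simp
              then show False using G0 a Geq by linarith
            qed
            ultimately show "fst q1 x = fst q2 x \<and> snd q1 x = snd q2 x" by blast
          qed
        qed
      qed
      have Inn: "0 \<le> (LINT x|lebesgue_on \<Omega>. G x)"
        using Gprop by (intro Bochner_Integration.integral_nonneg) blast
      have "(LINT x|lebesgue_on \<Omega>. G x) \<noteq> 0"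
      proof
        assume "(LINT x|lebesgue_on \<Omega>. G x) = 0"
        then have "AE x in lebesgue_on \<Omega>. G x = 0"
        proof -
          have "AE x in lebesgue_on \<Omega>. 0 \<le> G x" using Gprop by (intro AE_I2) blast
          then show ?thesis using integral_nonneg_eq_0_iff_AE[OF Gint] \<open>(LINT x|lebesgue_on \<Omega>. G x) = 0\<close> by blast
        qed
        then have "AE x in lebesgue_on \<Omega>. fst q1 x = fst q2 x \<and> snd q1 x = snd q2 x"
          by (rule AE_mp) (use Gprop in \<open>intro AE_I2, blast\<close>)
        then show False using nae unfolding state_ae_eq_def by blast
      qed
      then show "0 < kernel \<Omega> \<theta> ?kt q1 q1 - 2 * kernel \<Omega> \<theta> ?kt q1 q2 + kernel \<Omega> \<theta> ?kt q2 q2"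
        unfolding eqk using Inn by simp
    qed
  qed
  show ?thesis using P1 P2 P3 P4 P5 by blast
qed

end
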